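(* Let $\mathbf{U}\subset\mathbb{C}$ be a closed interval, a closed square, a closed disk or a closed annulus, and let $U$ be, correspondingly, the open interval, open square, open disk or open annulus, so that $\mathbf{U}$ is the compact closure of $U$. Then the closure of $U^n$ in $\mathbb{C}^n$ is $\mathbf{U}^n$, the closure of $\mathrm{Mult}_n(U)$ in $\mathrm{Mult}_n(\mathbb{C})$ is $\mathrm{Mult}_n(\mathbf{U})$, and the closure of $\mathrm{Poly}_d^{mt}(U)$ in $\mathrm{Poly}_d^{mt}(\mathbb{C})$ is $\mathrm{Poly}_d^{mt}(\mathbf{U})$; all three closures are compact.
   Context: $n=d-1$. $\mathrm{Mult}_n(X)=X^n/\mathrm{Sym}_n$ is the space of $n$-element multisets in $X$. $\mathrm{Poly}_d^{mt}(X)$ is the space of monic degree-$d$ complex polynomials modulo precomposition with translations, all of whose critical values lie in $X$, topologized via coefficients of the centered representative. The open interval is the closed interval minus its endpoints. *)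

theory Defs
  imports "HOL-Analysis.Analysis" "HOL-Library.Multiset" "HOL-Computational_Algebra.Polynomial"
begin

definition closed_square :: "complex \<Rightarrow> complex \<Rightarrow> complex set" where
  "closed_square a w = {a + w * (complex_of_real s + \<i> * complex_of_real t) | s t.
      0 \<le> s \<and> s \<le> 1 \<and> 0 \<le> t \<and> t \<le> 1}"

definition open_square :: "complex \<Rightarrow> complex \<Rightarrow> complex set" where
  "open_square a w = {a + w * (complex_of_real s + \<i> * complex_of_real t) | s t.
      0 < s \<and> s < 1 \<and> 0 < t \<and> t < 1}"

definition closed_annulus :: "complex \<Rightarrow> real \<Rightarrow> real \<Rightarrow> complex set" where
  "closed_annulus c r1 r2 = {z. r1 \<le> cmod (z - c) \<and> cmod (z - c) \<le> r2}"

definition open_annulus :: "complex \<Rightarrow> real \<Rightarrow> real \<Rightarrow> complex set" where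
  "open_annulus c r1 r2 = {z. r1 < cmod (z - c) \<and> cmod (z - c) < r2}"

definition shape_pair :: "complex set \<Rightarrow> complex set \<Rightarrow> bool" where
  "shape_pair Ubar U \<longleftrightarrow>
     (\<exists>a b. a \<noteq> b \<and> Ubar = closed_segment a b \<and> U = open_segment a b) \<or>
     (\<exists>a w. w \<noteq> 0 \<and> Ubar = closed_square a w \<and> U = open_square a w) \<or>
     (\<exists>c r. 0 < r \<and> Ubar = cball c r \<and> U = ball c r) \<or>
     (\<exists>c r1 r2. 0 < r1 \<and> r1 < r2 \<and> Ubar = closed_annulus c r1 r2 \<and> U = open_annulus c r1 r2)"

text \<open>C^n as extensional functions on {..<n} with the product topology.\<close>
definition Cn_top :: "nat \<Rightarrow> (nat \<Rightarrow> complex) topology" where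
  "Cn_top n = product_topology (\<lambda>_. euclidean) {..<n}"

definition Mult :: "nat \<Rightarrow> complex set \<Rightarrow> complex multiset set" where
  "Mult n X = {M. size M = n \<and> set_mset M \<subseteq> X}"

definition mult_of :: "nat \<Rightarrow> (nat \<Rightarrow> complex) \<Rightarrow> complex multiset" where
  "mult_of n f = image_mset f (mset_set {..<n})"

definition quotient_top :: "'a topology \<Rightarrow> ('a \<Rightarrow> 'b) \<Rightarrow> 'b topology" where
  "quotient_top X f = topology (\<lambda>S. S \<subseteq> f ` topspace X \<and> openin X {x \<in> topspace X. f x \<in> S})"

lemma istopology_quotient_top:
  "istopology (\<lambda>S. S \<subseteq> f ` topspace X \<and> openin X {x \<in> topspace X. f x \<in> S})"
proof -
  have 1: "S \<inter> T \<subseteq> f ` topspace X \<and> openin X {x \<in> topspace X. f x \<in> S \<inter> T}"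
    if hS: "S \<subseteq> f ` topspace X \<and> openin X {x \<in> topspace X. f x \<in> S}"
    and hT: "T \<subseteq> f ` topspace X \<and> openin X {x \<in> topspace X. f x \<in> T}" for S T
  proof -
    have eq: "{x \<in> topspace X. f x \<in> S \<inter> T} = {x \<in> topspace X. f x \<in> S} \<inter> {x \<in> topspace X. f x \<in> T}" by auto
    have "openin X ({x \<in> topspace X. f x \<in> S} \<inter> {x \<in> topspace X. f x \<in> T})"
      using hS hT by (intro openin_Int) auto
    then show ?thesis using hS eq by auto
  qed
  have 2: "\<Union>K \<subseteq> f ` topspace X \<and> openin X {x \<in> topspace X. f x \<in> \<Union>K}"
    if K: "\<forall>S\<in>K. S \<subseteq> f ` topspace X \<and> openin X {x \<in> topspace X. f x \<in> S}" for K
  proof -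
    have "{x \<in> topspace X. f x \<in> \<Union>K} = (\<Union>S\<in>K. {x \<in> topspace X. f x \<in> S})" by auto
    then show ?thesis using K by auto
  qed
  show ?thesis unfolding istopology_def using 1 2 by blast
qed

definition Mult_top :: "nat \<Rightarrow> complex multiset topology" where
  "Mult_top n = quotient_top (Cn_top n) (mult_of n)"

text \<open>A class of monic degree-d polynomials modulo translation is represented by its
  unique centered representative (coefficient of z^(d-1) equal to 0).\<close>
definition centered_monic :: "nat \<Rightarrow> complex poly set" where
  "centered_monic d = {p. degree p = d \<and> lead_coeff p = 1 \<and> coeff p (d - 1) = 0}"

definition critical_values :: "complex poly \<Rightarrow> complex set" where
  "critical_values p = {poly p z | z. poly (pderiv p) z = 0}"

definition Poly_mt :: "nat \<Rightarrow> complex set \<Rightarrow> complex poly set" where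
  "Poly_mt d X = {p \<in> centered_monic d. critical_values p \<subseteq> X}"

text \<open>Topology via the free coefficients a_0, ..., a_(d-2) of the centered representative.\<close>
definition Poly_mt_top :: "nat \<Rightarrow> complex poly topology" where
  "Poly_mt_top d = pullback_topology (centered_monic d)
      (\<lambda>p. restrict (coeff p) {..<d - 1}) (Cn_top (d - 1))"

end

theory Submission
  imports Defs "HOL-Computational_Algebra.Fundamental_Theorem_Algebra"
begin


lemma approx_closure:
  assumes "closed Ubar" "U \<subseteq> Ubar" "\<And>v e. v \<in> Ubar \<Longrightarrow> e > 0 \<Longrightarrow> \<exists>u\<in>U. dist u v < e"
  shows "closure U = Ubar"
proof
  show "closure U \<subseteq> Ubar" using assms closure_minimal by blast
  show "Ubar \<subseteq> closure U"
    using assms(3) by (auto simp: closure_approachable)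
qed

lemma star_approx:
  fixes c :: complex
  assumes "\<forall>x\<in>Ubar. \<forall>s::real. 0 < s \<and> s < 1 \<longrightarrow> c + complex_of_real s * (x - c) \<in> U" "v \<in> Ubar" "e > 0"
  shows "\<exists>u\<in>U. dist u v < e"
proof -
  define s where "s = max (1/2) (1 - e / (2 * (cmod (v - c) + 1)))"
  have s: "0 < s" "s < 1" using assms(3) by (auto simp: s_def field_simps intro!: divide_pos_pos add_pos_nonneg)
  have "dist (c + s * (v - c)) v = (1 - s) * cmod (v - c)"
  proof -
    have "c + s * (v - c) - v = complex_of_real (s - 1) * (v - c)" by (simp add: algebra_simps)
    then show ?thesis using s by (simp only: dist_norm norm_mult norm_of_real) simp
  qed
  also have "\<dots> < e"
  proof -
    have "1 - s \<le> e / (2 * (cmod (v - c) + 1))" by (simp add: s_def)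
    then have "(1 - s) * cmod (v - c) \<le> e / (2 * (cmod (v - c) + 1)) * cmod (v - c)"
      by (intro mult_right_mono) auto
    also have "\<dots> < e"
    proof -
      define m where "m = cmod (v - c)"
      have m: "m \<ge> 0" by (simp add: m_def)
      have "m / (2 * (m + 1)) < 1" using m by (simp add: divide_less_eq)
      then have "e * (m / (2 * (m + 1))) < e * 1" using assms(3) by (intro mult_strict_left_mono) auto
      then show ?thesis by (simp add: m_def[symmetric])
    qed
    finally show ?thesis .
  qed
  finally show ?thesis using assms(1,2) s by blast
qed

lemma seg_star:
  fixes a b :: complex
  assumes "a \<noteq> b"
  shows "\<forall>x\<in>closed_segment a b. \<forall>s::real. 0 < s \<and> s < 1 \<longrightarrow>
           (a + b) / 2 + complex_of_real s * (x - (a + b) / 2) \<in> open_segment a b"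
proof (intro ballI allI impI)
  fix x s assume x: "x \<in> closed_segment a b" and s: "0 < s \<and> s < (1::real)"
  obtain u where u: "0 \<le> u" "u \<le> 1" "x = (1 - u) *\<^sub>R a + u *\<^sub>R b" using x by (auto simp: in_segment)
  define u' where "u' = 1/2 + s * (u - 1/2)"
  have u': "0 < u'" "u' < 1"
  proof -
    have h1: "s * (u - 1/2) \<le> s * (1/2)" using s u by (intro mult_left_mono) auto
    have h2: "s * (-1/2) \<le> s * (u - 1/2)" using s u by (intro mult_left_mono) auto
    show "0 < u'" "u' < 1" using s h1 h2 unfolding u'_def by linarith+
  qed
  have "(a + b) / 2 + complex_of_real s * (x - (a + b) / 2) = (1 - u') *\<^sub>R a + u' *\<^sub>R b"
    by (simp add: u u'_def scaleR_conv_of_real algebra_simps) (simp add: field_simps)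
  then show "(a + b) / 2 + complex_of_real s * (x - (a + b) / 2) \<in> open_segment a b"
    using u' assms by (auto simp: in_segment)
qed

lemma closed_square_eq:
  "closed_square a w = (\<lambda>(s,t). a + w * (complex_of_real s + \<i> * complex_of_real t)) ` ({0..1} \<times> {0..1})"
  unfolding closed_square_def image_def by force

lemma compact_closed_square: "compact (closed_square a w)"
  unfolding closed_square_eq
  by (intro compact_continuous_image compact_Times compact_Icc)
     (auto intro!: continuous_intros simp: case_prod_unfold)

lemma open_square_sub: "open_square a w \<subseteq> closed_square a w"
proof
  fix z assume "z \<in> open_square a w"
  then obtain s t where st: "0 < s" "s < 1" "0 < t" "t < 1" "z = a + w * (complex_of_real s + \<i> * complex_of_real t)"
    by (auto simp: open_square_def)
  then show "z \<in> closed_square a w" unfolding closed_square_def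
    by (intro CollectI exI[of _ s] exI[of _ t]) auto
qed

lemma square_star:
  "\<forall>x\<in>closed_square a w. \<forall>s::real. 0 < s \<and> s < 1 \<longrightarrow>
     (a + w * (complex_of_real (1/2) + \<i> * complex_of_real (1/2))) + complex_of_real s * (x - (a + w * (complex_of_real (1/2) + \<i> * complex_of_real (1/2)))) \<in> open_square a w"
proof (intro ballI allI impI)
  fix x s assume x: "x \<in> closed_square a w" and s: "0 < s \<and> s < (1::real)"
  obtain p q where pq: "0 \<le> p" "p \<le> 1" "0 \<le> q" "q \<le> 1" "x = a + w * (complex_of_real p + \<i> * complex_of_real q)"
    using x by (auto simp: closed_square_def)
  have mid: "\<And>u::real. 0 \<le> u \<Longrightarrow> u \<le> 1 \<Longrightarrow> 0 < 1/2 + s * (u - 1/2) \<and> 1/2 + s * (u - 1/2) < 1"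
  proof -
    fix u :: real assume "0 \<le> u" "u \<le> 1"
    then have h1: "s * (u - 1/2) \<le> s * (1/2)" and h2: "s * (-1/2) \<le> s * (u - 1/2)" using s by (intro mult_left_mono; simp)+
    show "0 < 1/2 + s * (u - 1/2) \<and> 1/2 + s * (u - 1/2) < 1" using s h1 h2 by linarith
  qed
  have "(a + w * (complex_of_real (1/2) + \<i> * complex_of_real (1/2))) + complex_of_real s * (x - (a + w * (complex_of_real (1/2) + \<i> * complex_of_real (1/2))))
     = a + w * (complex_of_real (1/2 + s * (p - 1/2)) + \<i> * complex_of_real (1/2 + s * (q - 1/2)))"
    by (simp add: pq algebra_simps)
  then show "(a + w * (complex_of_real (1/2) + \<i> * complex_of_real (1/2))) + complex_of_real s * (x - (a + w * (complex_of_real (1/2) + \<i> * complex_of_real (1/2)))) \<in> open_square a w"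
    using mid[OF pq(1,2)] mid[OF pq(3,4)] unfolding open_square_def by blast
qed

lemma ball_star:
  fixes c :: complex assumes "r > 0"
  shows "\<forall>x\<in>cball c r. \<forall>s::real. 0 < s \<and> s < 1 \<longrightarrow> c + complex_of_real s * (x - c) \<in> ball c r"
proof (intro ballI allI impI)
  fix x s assume x: "x \<in> cball c r" and s: "0 < s \<and> s < (1::real)"
  have "dist c (c + complex_of_real s * (x - c)) = s * cmod (x - c)"
    using s by (simp add: dist_norm norm_mult)
  also have "\<dots> \<le> s * r" using x s by (intro mult_left_mono) (auto simp: dist_norm norm_minus_commute)
  also have "\<dots> < r" using s assms by simp
  finally show "c + complex_of_real s * (x - c) \<in> ball c r" by simp
qed

lemma compact_closed_annulus: "compact (closed_annulus c r1 r2)"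
proof -
  have "closed_annulus c r1 r2 = cball c r2 \<inter> {z. r1 \<le> cmod (z - c)}"
    by (auto simp: closed_annulus_def dist_norm norm_minus_commute)
  moreover have "closed {z. r1 \<le> cmod (z - c)}"
    by (intro closed_Collect_le continuous_intros)
  ultimately show ?thesis by (simp add: compact_Int_closed)
qed

lemma annulus_push:
  fixes c :: complex
  assumes r: "0 < r1" "r1 < r2"
  defines "m \<equiv> (r1 + r2) / 2"
  shows "\<forall>v\<in>closed_annulus c r1 r2. \<forall>t::real. 0 < t \<and> t \<le> 1 \<longrightarrow>
     ball (v + complex_of_real t * ((v - c) * (complex_of_real (m / cmod (v - c)) - 1))) ((r2 - r1) / 4 * t)
       \<subseteq> open_annulus c r1 r2"
proof (intro ballI allI impI subsetI)
  fix v t y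
  assume v: "v \<in> closed_annulus c r1 r2" and t: "0 < t \<and> t \<le> (1::real)"
    and y: "y \<in> ball (v + complex_of_real t * ((v - c) * (complex_of_real (m / cmod (v - c)) - 1))) ((r2 - r1) / 4 * t)"
  define \<rho> where "\<rho> = cmod (v - c)"
  have \<rho>: "r1 \<le> \<rho>" "\<rho> \<le> r2" using v by (auto simp: closed_annulus_def \<rho>_def)
  have \<rho>pos: "\<rho> > 0" using \<rho> r by simp
  have eq: "v + complex_of_real t * ((v - c) * (complex_of_real (m / cmod (v - c)) - 1)) - c
      = (v - c) * complex_of_real (((1 - t) * \<rho> + t * m) / \<rho>)"
  proof -
    have r1: "((1 - t) * \<rho> + t * m) / \<rho> = 1 + t * (m / \<rho> - 1)" using \<rho>pos by (simp add: field_simps)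
    have r2: "complex_of_real (((1 - t) * \<rho> + t * m) / \<rho>) = 1 + complex_of_real t * (complex_of_real (m / \<rho>) - 1)"
      unfolding r1 by simp
    show ?thesis unfolding r2 \<rho>_def[symmetric] by (simp add: algebra_simps)
  qed
  have p1: "(1 - t) * \<rho> \<ge> 0" using t \<rho>pos by simp
  have p2: "t * m > 0" using t r by (simp add: m_def)
  have pos: "(1 - t) * \<rho> + t * m > 0" using p1 p2 by linarith
  have nm: "cmod (v + complex_of_real t * ((v - c) * (complex_of_real (m / cmod (v - c)) - 1)) - c) = (1 - t) * \<rho> + t * m"
  proof -
    have ab: "\<bar>((1 - t) * \<rho> + t * m) / \<rho>\<bar> = ((1 - t) * \<rho> + t * m) / \<rho>" using pos \<rho>pos by simp
    have "cmod (v + complex_of_real t * ((v - c) * (complex_of_real (m / cmod (v - c)) - 1)) - c)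
       = cmod (v - c) * \<bar>((1 - t) * \<rho> + t * m) / \<rho>\<bar>"
      by (subst eq) (simp only: norm_mult norm_of_real)
    also have "\<dots> = (1 - t) * \<rho> + t * m" unfolding ab \<rho>_def[symmetric] using \<rho>pos by simp
    finally show ?thesis .
  qed
  have d: "cmod (y - (v + complex_of_real t * ((v - c) * (complex_of_real (m / cmod (v - c)) - 1)))) < (r2 - r1) / 4 * t"
    using y by (simp add: dist_norm norm_minus_commute)
  have tri1: "cmod (y - c) \<le> (1 - t) * \<rho> + t * m + (r2 - r1) / 4 * t"
    using norm_triangle_ineq[of "y - (v + complex_of_real t * ((v - c) * (complex_of_real (m / cmod (v - c)) - 1)))"
        "v + complex_of_real t * ((v - c) * (complex_of_real (m / cmod (v - c)) - 1)) - c"] nm d by simp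
  have tri2: "(1 - t) * \<rho> + t * m - (r2 - r1) / 4 * t < cmod (y - c)"
    using norm_triangle_ineq2[of "v + complex_of_real t * ((v - c) * (complex_of_real (m / cmod (v - c)) - 1)) - c"
        "v + complex_of_real t * ((v - c) * (complex_of_real (m / cmod (v - c)) - 1)) - y"] nm d
    by (simp add: norm_minus_commute)
  have a1: "(1 - t) * \<rho> \<le> (1 - t) * r2" "(1 - t) * r1 \<le> (1 - t) * \<rho>" using t \<rho> by (intro mult_left_mono; simp)+
  have b1: "t * (m + (r2 - r1) / 4) < t * r2" using t r by (intro mult_strict_left_mono) (auto simp: m_def field_simps)
  have b2: "t * r1 < t * (m - (r2 - r1) / 4)" using t r by (intro mult_strict_left_mono) (auto simp: m_def field_simps)
  have e1: "(1 - t) * r2 = r2 - t * r2" "(1 - t) * r1 = r1 - t * r1" by (simp_all add: algebra_simps)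
  have e2: "t * (m + (r2 - r1) / 4) = t * m + (r2 - r1) / 4 * t" "t * (m - (r2 - r1) / 4) = t * m - (r2 - r1) / 4 * t"
    by (simp_all add: algebra_simps)
  have "(1 - t) * \<rho> + t * m + (r2 - r1) / 4 * t < r2"
    using a1 b1 e1 e2 by argo
  moreover have "r1 < (1 - t) * \<rho> + t * m - (r2 - r1) / 4 * t"
    using a1 b2 e1 e2 by argo
  ultimately show "y \<in> open_annulus c r1 r2" using tri1 tri2 by (auto simp: open_annulus_def)
qed

lemma push_approx:
  fixes \<delta> :: "complex \<Rightarrow> complex"
  assumes "\<forall>v\<in>Ubar. \<forall>t::real. 0 < t \<and> t \<le> 1 \<longrightarrow> ball (v + complex_of_real t * \<delta> v) (\<kappa> * t) \<subseteq> U"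
    "\<kappa> > 0" "v \<in> Ubar" "e > 0"
  shows "\<exists>u\<in>U. dist u v < e"
proof -
  define t where "t = min 1 (e / (2 * (cmod (\<delta> v) + 1)))"
  have "0 < e / (2 * (cmod (\<delta> v) + 1))" using assms(4) by (intro divide_pos_pos) (auto intro: add_nonneg_pos)
  then have t: "0 < t" "t \<le> 1" by (auto simp: t_def)
  have "v + complex_of_real t * \<delta> v \<in> U" using assms(1,3) t assms(2) by (meson centre_in_ball mult_pos_pos subsetD)
  moreover have "dist (v + complex_of_real t * \<delta> v) v < e"
  proof -
    have "dist (v + complex_of_real t * \<delta> v) v = t * cmod (\<delta> v)" using t by (simp add: dist_norm norm_mult)
    also have "\<dots> \<le> e / (2 * (cmod (\<delta> v) + 1)) * cmod (\<delta> v)" by (rule mult_right_mono) (simp_all add: t_def)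
    also have "\<dots> < e"
    proof -
      define m where "m = cmod (\<delta> v)"
      have m: "m \<ge> 0" by (simp add: m_def)
      have "m / (2 * (m + 1)) < 1" using m by (simp add: divide_less_eq)
      then have "e * (m / (2 * (m + 1))) < e * 1" using assms(4) by (intro mult_strict_left_mono) auto
      then show ?thesis by (simp add: m_def[symmetric])
    qed
    finally show ?thesis .
  qed
  ultimately show ?thesis by blast
qed

definition star_or_push :: "complex set \<Rightarrow> complex set \<Rightarrow> bool" where
  "star_or_push Ubar U \<longleftrightarrow>
    (\<exists>c. \<forall>x\<in>Ubar. \<forall>s::real. 0 < s \<and> s < 1 \<longrightarrow> c + complex_of_real s * (x - c) \<in> U) \<or>
    (\<exists>\<delta> \<kappa>. \<kappa> > 0 \<and> (\<forall>v\<in>Ubar. \<forall>t::real. 0 < t \<and> t \<le> 1 \<longrightarrow> ball (v + complex_of_real t * \<delta> v) (\<kappa> * t) \<subseteq> U))"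

lemma shape_props:
  assumes "shape_pair Ubar U"
  shows "compact Ubar" "U \<subseteq> Ubar" "star_or_push Ubar U"
proof -
  have "compact Ubar \<and> U \<subseteq> Ubar \<and> star_or_push Ubar U"
    using assms unfolding shape_pair_def
  proof (elim disjE exE conjE)
    fix a b assume ab: "a \<noteq> b" "Ubar = closed_segment a b" "U = open_segment a b"
    show ?thesis using ab seg_star[OF ab(1)] unfolding star_or_push_def
      by (auto simp: segment_open_subset_closed)
  next
    fix a w assume aw: "w \<noteq> 0" "Ubar = closed_square a w" "U = open_square a w"
    show ?thesis using aw square_star[of a w] unfolding star_or_push_def
      using compact_closed_square open_square_sub by blast
  next
    fix c r assume cr: "0 < r" "Ubar = cball c r" "U = ball c r"
    show ?thesis using cr ball_star[OF cr(1)] unfolding star_or_push_def by auto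
  next
    fix c r1 r2 assume cr: "0 < r1" "r1 < r2" "Ubar = closed_annulus c r1 r2" "U = open_annulus c r1 r2"
    have k: "(r2 - r1) / 4 > 0" using cr by simp
    have "U \<subseteq> Ubar" using cr by (auto simp: open_annulus_def closed_annulus_def)
    then show ?thesis using cr annulus_push[OF cr(1,2), of c] compact_closed_annulus k unfolding star_or_push_def
      by (intro conjI disjI2 exI[of _ "\<lambda>v. (v - c) * (complex_of_real ((r1 + r2) / 2 / cmod (v - c)) - 1)"]
          exI[of _ "(r2 - r1) / 4"]) auto
  qed
  then show "compact Ubar" "U \<subseteq> Ubar" "star_or_push Ubar U" by auto
qed

lemma star_or_push_closure:
  assumes "star_or_push Ubar U" "compact Ubar" "U \<subseteq> Ubar"
  shows "closure U = Ubar"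
proof (rule approx_closure)
  show "closed Ubar" using assms(2) compact_imp_closed by blast
  show "U \<subseteq> Ubar" by fact
  fix v e assume "v \<in> Ubar" "(e::real) > 0"
  then show "\<exists>u\<in>U. dist u v < e" using assms(1) unfolding star_or_push_def
    using star_approx push_approx by metis
qed



lemma Cn_closure: "closure U = Ubar \<Longrightarrow> Cn_top n closure_of PiE {..<n} (\<lambda>_. U) = PiE {..<n} (\<lambda>_. Ubar)"
  by (simp add: Cn_top_def closure_of_product_topology)

lemma Cn_compact: "compact Ubar \<Longrightarrow> compactin (Cn_top n) (PiE {..<n} (\<lambda>_. Ubar))"
  by (simp add: Cn_top_def compactin_PiE)

lemma topspace_Cn: "topspace (Cn_top n) = PiE {..<n} (\<lambda>_. UNIV)"
  by (simp add: Cn_top_def)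

lemma openin_quotient_top:
  "openin (quotient_top X f) S \<longleftrightarrow> S \<subseteq> f ` topspace X \<and> openin X {x \<in> topspace X. f x \<in> S}"
  unfolding quotient_top_def topology_inverse'[OF istopology_quotient_top] by simp

lemma topspace_quotient_top: "topspace (quotient_top X f) = f ` topspace X"
proof -
  have "openin (quotient_top X f) (f ` topspace X)"
  proof -
    have "{x \<in> topspace X. f x \<in> f ` topspace X} = topspace X" by auto
    then show ?thesis unfolding openin_quotient_top by simp
  qed
  then have "f ` topspace X \<subseteq> topspace (quotient_top X f)" by (rule openin_subset)
  moreover have "topspace (quotient_top X f) \<subseteq> f ` topspace X"
    using openin_quotient_top[of X f "topspace (quotient_top X f)"] by simp
  ultimately show ?thesis by blast
qed

lemma continuous_map_quotient_top: "continuous_map X (quotient_top X f) f"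
  unfolding continuous_map_def openin_quotient_top topspace_quotient_top by auto

lemma set_mult_of: "set_mset (mult_of n g) = g ` {..<n}"
  by (simp add: mult_of_def)

lemma size_mult_of: "size (mult_of n g) = n"
  by (simp add: mult_of_def)

lemma mult_of_image: "mult_of n ` PiE {..<n} (\<lambda>_. A) = Mult n A"
proof
  show "mult_of n ` PiE {..<n} (\<lambda>_. A) \<subseteq> Mult n A"
  proof
    fix M assume "M \<in> mult_of n ` PiE {..<n} (\<lambda>_. A)"
    then obtain g where g: "g \<in> PiE {..<n} (\<lambda>_. A)" "M = mult_of n g" by blast
    have "g ` {..<n} \<subseteq> A" using g(1) by (intro image_subsetI) (rule PiE_mem)
    then show "M \<in> Mult n A" unfolding Mult_def g(2) by (simp add: set_mult_of size_mult_of)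
  qed
  show "Mult n A \<subseteq> mult_of n ` PiE {..<n} (\<lambda>_. A)"
  proof
    fix M assume M: "M \<in> Mult n A"
    obtain xs where xs: "mset xs = M" using ex_mset by blast
    have len: "length xs = n" using M xs by (auto simp: Mult_def)
    define g where "g = (\<lambda>i. if i < n then xs ! i else undefined)"
    have "mult_of n g = mset (map g [0..<n])"
      by (simp add: mult_of_def mset_set_upto_eq_mset_upto)
    also have "map g [0..<n] = xs"
      using len by (intro nth_equalityI) (auto simp: g_def)
    finally have gM: "mult_of n g = M" using xs by simp
    have sA: "set xs \<subseteq> A" using M xs by (auto simp: Mult_def)
    moreover have "g \<in> PiE {..<n} (\<lambda>_. A)"
    proof (rule PiE_I)
      fix i assume "i \<in> {..<n}"
      then show "g i \<in> A" using sA len nth_mem[of i xs] by (auto simp: g_def)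
    next
      fix i assume "i \<notin> {..<n}"
      then show "g i = undefined" by (simp add: g_def)
    qed
    ultimately show "M \<in> mult_of n ` PiE {..<n} (\<lambda>_. A)" using gM by blast
  qed
qed

lemma mult_preimage: "{x \<in> topspace (Cn_top n). mult_of n x \<in> Mult n A} = PiE {..<n} (\<lambda>_. A)"
proof
  show "{x \<in> topspace (Cn_top n). mult_of n x \<in> Mult n A} \<subseteq> PiE {..<n} (\<lambda>_. A)"
  proof
    fix x assume x: "x \<in> {x \<in> topspace (Cn_top n). mult_of n x \<in> Mult n A}"
    then have x1: "x \<in> PiE {..<n} (\<lambda>_. UNIV)" and x2: "x ` {..<n} \<subseteq> A"
      by (auto simp: topspace_Cn Mult_def set_mult_of)
    show "x \<in> PiE {..<n} (\<lambda>_. A)"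
    proof (rule PiE_I)
      fix i assume "i \<in> {..<n}" then show "x i \<in> A" using x2 by blast
    next
      fix i assume "i \<notin> {..<n}" then show "x i = undefined" using x1 by (rule PiE_arb[rotated])
    qed
  qed
  show "PiE {..<n} (\<lambda>_. A) \<subseteq> {x \<in> topspace (Cn_top n). mult_of n x \<in> Mult n A}"
  proof
    fix x assume x: "x \<in> PiE {..<n} (\<lambda>_. A)"
    then have "x \<in> topspace (Cn_top n)" unfolding topspace_Cn by (rule subsetD[OF PiE_mono, rotated]) auto
    moreover have "x ` {..<n} \<subseteq> A" using x by (intro image_subsetI) (rule PiE_mem)
    ultimately show "x \<in> {x \<in> topspace (Cn_top n). mult_of n x \<in> Mult n A}"
      by (simp add: Mult_def set_mult_of size_mult_of)
  qed
qed

lemma topspace_Mult_top: "topspace (Mult_top n) = Mult n UNIV"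
  by (simp add: Mult_top_def topspace_quotient_top topspace_Cn mult_of_image)

lemma Mult_part:
  assumes "closure U = Ubar" "compact Ubar" "U \<subseteq> Ubar"
  shows "Mult_top n closure_of (Mult n U) = Mult n Ubar \<and> compactin (Mult_top n) (Mult n Ubar)"
proof (intro conjI)
  show "compactin (Mult_top n) (Mult n Ubar)"
    using image_compactin[OF Cn_compact[OF assms(2), of n] continuous_map_quotient_top[of "Cn_top n" "mult_of n"]]
    by (simp add: mult_of_image Mult_top_def)
  have closed: "closedin (Mult_top n) (Mult n Ubar)"
  proof -
    have "Cn_top n closure_of PiE {..<n} (\<lambda>_. Ubar) = PiE {..<n} (\<lambda>_. Ubar)"
      by (rule Cn_closure) (simp add: closure_closed compact_imp_closed assms(2))
    then have "closedin (Cn_top n) (PiE {..<n} (\<lambda>_. Ubar))" by (simp add: closure_of_eq)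
    then have o: "openin (Cn_top n) (topspace (Cn_top n) - PiE {..<n} (\<lambda>_. Ubar))" by auto
    have "topspace (Mult_top n) - Mult n Ubar \<subseteq> topspace (Mult_top n)" by blast
    moreover have "{x \<in> topspace (Cn_top n). mult_of n x \<in> topspace (Mult_top n) - Mult n Ubar}
        = topspace (Cn_top n) - PiE {..<n} (\<lambda>_. Ubar)"
      using mult_preimage[of n Ubar] by (auto simp: topspace_Mult_top Mult_def size_mult_of)
    ultimately have "openin (Mult_top n) (topspace (Mult_top n) - Mult n Ubar)"
      using o unfolding Mult_top_def openin_quotient_top topspace_quotient_top by simp
    moreover have "Mult n Ubar \<subseteq> topspace (Mult_top n)" by (auto simp: topspace_Mult_top Mult_def)
    ultimately show ?thesis by (simp add: closedin_def)
  qed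
  show "Mult_top n closure_of Mult n U = Mult n Ubar"
  proof
    show "Mult_top n closure_of Mult n U \<subseteq> Mult n Ubar"
      using closed assms(3) by (intro closure_of_minimal) (auto simp: Mult_def)
    show "Mult n Ubar \<subseteq> Mult_top n closure_of Mult n U"
    proof
      fix M assume M: "M \<in> Mult n Ubar"
      then obtain g where g: "g \<in> PiE {..<n} (\<lambda>_. Ubar)" "M = mult_of n g"
        using mult_of_image[of n Ubar] by blast
      have gcl: "g \<in> Cn_top n closure_of PiE {..<n} (\<lambda>_. U)" using g Cn_closure[OF assms(1)] by simp
      show "M \<in> Mult_top n closure_of Mult n U"
        unfolding in_closure_of
      proof (intro conjI allI impI)
        show "M \<in> topspace (Mult_top n)" using M by (auto simp: topspace_Mult_top Mult_def)
        fix T assume T: "M \<in> T \<and> openin (Mult_top n) T"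
        then have "openin (Cn_top n) {x \<in> topspace (Cn_top n). mult_of n x \<in> T}"
          unfolding Mult_top_def openin_quotient_top by simp
        moreover have "g \<in> {x \<in> topspace (Cn_top n). mult_of n x \<in> T}"
          using g T by (auto simp: topspace_Cn PiE_iff)
        ultimately have "\<exists>y. y \<in> PiE {..<n} (\<lambda>_. U) \<and> y \<in> {x \<in> topspace (Cn_top n). mult_of n x \<in> T}"
          using gcl unfolding in_closure_of by (elim conjE allE) (erule mp, rule conjI)
        then obtain g' where g': "g' \<in> PiE {..<n} (\<lambda>_. U)" "mult_of n g' \<in> T" by blast
        then show "\<exists>y. y \<in> Mult n U \<and> y \<in> T"
          using mult_of_image[of n U] by blast
      qed
    qed
  qed
qed



definition cmap :: "nat \<Rightarrow> complex poly \<Rightarrow> (nat \<Rightarrow> complex)" where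
  "cmap d p = restrict (coeff p) {..<d - 1}"

definition pm :: "nat \<Rightarrow> (nat \<Rightarrow> complex) \<Rightarrow> complex poly" where
  "pm d g = monom 1 d + (\<Sum>k<d - 1. monom (g k) k)"

lemma coeff_pm: "1 \<le> d \<Longrightarrow> coeff (pm d g) k = (if k = d then 1 else if k < d - 1 then g k else 0)"
  by (auto simp: pm_def coeff_sum)

lemma pm_in: assumes "1 \<le> d" shows "pm d g \<in> centered_monic d"
proof -
  have c: "coeff (pm d g) k = (if k = d then 1 else if k < d - 1 then g k else 0)" for k
    using coeff_pm[OF assms] .
  have "degree (pm d g) \<le> d" by (rule degree_le) (auto simp: c)
  moreover have "d \<le> degree (pm d g)" by (rule le_degree) (simp add: c)
  ultimately have "degree (pm d g) = d" by simp
  then show ?thesis using assms by (simp add: centered_monic_def c)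
qed

lemma pm_cmap: assumes "p \<in> centered_monic d" "1 \<le> d" shows "pm d (cmap d p) = p"
proof (rule poly_eqI)
  fix k
  have dp: "degree p = d" "coeff p d = 1" "coeff p (d - 1) = 0" using assms by (auto simp: centered_monic_def)
  show "coeff (pm d (cmap d p)) k = coeff p k"
  proof (cases "k > d")
    case True then show ?thesis using dp coeff_eq_0[of p k] coeff_pm[OF assms(2)] by auto
  next
    case False
    then have "k = d \<or> k < d - 1 \<or> k = d - 1" by linarith
    then show ?thesis using dp coeff_pm[OF assms(2)] by (auto simp: cmap_def)
  qed
qed

lemma cmap_pm: assumes "g \<in> PiE {..<d - 1} (\<lambda>_. UNIV)" "1 \<le> d" shows "cmap d (pm d g) = g"
proof
  fix k show "cmap d (pm d g) k = g k"
  proof (cases "k < d - 1")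
    case True
    then have "k \<noteq> d" by linarith
    then show ?thesis using True by (simp add: cmap_def coeff_pm[OF assms(2)])
  next
    case False
    then show ?thesis using PiE_arb[OF assms(1), of k] by (simp add: cmap_def)
  qed
qed

lemma cmap_in: "cmap d p \<in> PiE {..<d - 1} (\<lambda>_. UNIV)"
  by (simp add: cmap_def)

lemma topspace_Poly: "topspace (Poly_mt_top d) = centered_monic d"
  by (auto simp: Poly_mt_top_def topspace_pullback_topology topspace_Cn cmap_def[symmetric] cmap_in)

lemma openin_Cn:
  "openin (Cn_top n) S \<longleftrightarrow> S \<subseteq> PiE {..<n} (\<lambda>_. UNIV) \<and>
     (\<forall>f\<in>S. \<exists>e>0. \<forall>g\<in>PiE {..<n} (\<lambda>_. UNIV). (\<forall>i<n. dist (g i) (f i) < e) \<longrightarrow> g \<in> S)"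
proof
  assume S: "openin (Cn_top n) S"
  show "S \<subseteq> PiE {..<n} (\<lambda>_. UNIV) \<and>
     (\<forall>f\<in>S. \<exists>e>0. \<forall>g\<in>PiE {..<n} (\<lambda>_. UNIV). (\<forall>i<n. dist (g i) (f i) < e) \<longrightarrow> g \<in> S)"
  proof (intro conjI ballI)
    show "S \<subseteq> PiE {..<n} (\<lambda>_. UNIV)" using openin_subset[OF S] by (simp add: topspace_Cn)
    fix f assume f: "f \<in> S"
    obtain U where U: "\<forall>i\<in>{..<n}. open (U i)" "f \<in> PiE {..<n} U" "PiE {..<n} U \<subseteq> S"
      using S f unfolding Cn_top_def openin_product_topology_alt by auto
    have "\<forall>i\<in>{..<n}. \<exists>e>0. ball (f i) e \<subseteq> U i"
      using U(1,2) by (meson PiE_mem open_contains_ball)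
    then obtain e where e: "\<And>i. i \<in> {..<n} \<Longrightarrow> e i > 0 \<and> ball (f i) (e i) \<subseteq> U i" by metis
    define e0 where "e0 = Min (insert 1 (e ` {..<n}))"
    have e0: "e0 > 0" unfolding e0_def using e by (subst Min_gr_iff) auto
    have e0le: "e0 \<le> e i" if "i < n" for i unfolding e0_def using that by (intro Min_le) auto
    show "\<exists>e>0. \<forall>g\<in>PiE {..<n} (\<lambda>_. UNIV). (\<forall>i<n. dist (g i) (f i) < e) \<longrightarrow> g \<in> S"
    proof (intro exI conjI ballI impI)
      show "e0 > 0" by (rule e0)
      fix g assume g: "g \<in> PiE {..<n} (\<lambda>_. UNIV)" and d: "\<forall>i<n. dist (g i) (f i) < e0"
      have "g \<in> PiE {..<n} U"
      proof (rule PiE_I)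
        fix i assume i: "i \<in> {..<n}"
        then have "g i \<in> ball (f i) (e i)" using d e0le[of i] by (auto simp: dist_commute)
        then show "g i \<in> U i" using e[OF i] by blast
      next
        fix i assume "i \<notin> {..<n}" then show "g i = undefined" using g by (rule PiE_arb[rotated])
      qed
      then show "g \<in> S" using U(3) by blast
    qed
  qed
next
  assume R: "S \<subseteq> PiE {..<n} (\<lambda>_. UNIV) \<and>
     (\<forall>f\<in>S. \<exists>e>0. \<forall>g\<in>PiE {..<n} (\<lambda>_. UNIV). (\<forall>i<n. dist (g i) (f i) < e) \<longrightarrow> g \<in> S)"
  show "openin (Cn_top n) S"
    unfolding Cn_top_def openin_product_topology_alt
  proof
    fix f assume f: "f \<in> S"
    then obtain e where e: "e > 0" "\<forall>g\<in>PiE {..<n} (\<lambda>_. UNIV). (\<forall>i<n. dist (g i) (f i) < e) \<longrightarrow> g \<in> S"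
      using R by blast
    have fP: "f \<in> PiE {..<n} (\<lambda>_. UNIV)" using R f by blast
    show "\<exists>U. finite {i \<in> {..<n}. U i \<noteq> topspace euclidean} \<and> (\<forall>i\<in>{..<n}. openin euclidean (U i)) \<and>
             f \<in> PiE {..<n} U \<and> PiE {..<n} U \<subseteq> S"
    proof (intro exI conjI)
      show "finite {i \<in> {..<n}. (\<lambda>i. ball (f i) e) i \<noteq> topspace euclidean}" by simp
      show "\<forall>i\<in>{..<n}. openin euclidean ((\<lambda>i. ball (f i) e) i)" by simp
      show "f \<in> PiE {..<n} (\<lambda>i. ball (f i) e)"
      proof (rule PiE_I)
        fix i show "f i \<in> ball (f i) e" using e by simp
      next
        fix i assume "i \<notin> {..<n}" then show "f i = undefined" using fP by (rule PiE_arb[rotated])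
      qed
      show "PiE {..<n} (\<lambda>i. ball (f i) e) \<subseteq> S"
      proof
        fix g assume g: "g \<in> PiE {..<n} (\<lambda>i. ball (f i) e)"
        have "g \<in> PiE {..<n} (\<lambda>_. UNIV)" using g by (rule subsetD[OF PiE_mono, rotated]) auto
        moreover have "\<forall>i<n. dist (g i) (f i) < e" using g by (auto dest!: PiE_mem simp: dist_commute)
        ultimately show "g \<in> S" using e by blast
      qed
    qed
  qed
qed

definition close :: "nat \<Rightarrow> real \<Rightarrow> complex poly \<Rightarrow> complex poly \<Rightarrow> bool" where
  "close d e p q \<longleftrightarrow> (\<forall>k<d - 1. dist (coeff q k) (coeff p k) < e)"

lemma openin_Poly:
  assumes d: "1 \<le> d"
  shows "openin (Poly_mt_top d) S \<longleftrightarrow> S \<subseteq> centered_monic d \<and>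
     (\<forall>p\<in>S. \<exists>e>0. \<forall>q\<in>centered_monic d. close d e p q \<longrightarrow> q \<in> S)"
proof
  assume "openin (Poly_mt_top d) S"
  then obtain U where U: "openin (Cn_top (d - 1)) U" "S = cmap d -` U \<inter> centered_monic d"
    unfolding Poly_mt_top_def openin_pullback_topology cmap_def by auto
  show "S \<subseteq> centered_monic d \<and> (\<forall>p\<in>S. \<exists>e>0. \<forall>q\<in>centered_monic d. close d e p q \<longrightarrow> q \<in> S)"
  proof (intro conjI ballI)
    show "S \<subseteq> centered_monic d" using U by blast
    fix p assume p: "p \<in> S"
    then have "cmap d p \<in> U" using U by blast
    then obtain e where e: "e > 0" "\<forall>g\<in>PiE {..<d - 1} (\<lambda>_. UNIV). (\<forall>i<d - 1. dist (g i) (cmap d p i) < e) \<longrightarrow> g \<in> U"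
      using U(1) unfolding openin_Cn by blast
    show "\<exists>e>0. \<forall>q\<in>centered_monic d. close d e p q \<longrightarrow> q \<in> S"
    proof (intro exI conjI ballI impI)
      show "e > 0" by fact
      fix q assume q: "q \<in> centered_monic d" "close d e p q"
      have "cmap d q \<in> U" using e(2) cmap_in[of d q] q(2) by (auto simp: close_def cmap_def)
      then show "q \<in> S" using U(2) q(1) by blast
    qed
  qed
next
  assume R: "S \<subseteq> centered_monic d \<and> (\<forall>p\<in>S. \<exists>e>0. \<forall>q\<in>centered_monic d. close d e p q \<longrightarrow> q \<in> S)"
  have o: "openin (Cn_top (d - 1)) (cmap d ` S)"
    unfolding openin_Cn
  proof (intro conjI ballI)
    show "cmap d ` S \<subseteq> PiE {..<d - 1} (\<lambda>_. UNIV)" using cmap_in by blast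
    fix f assume "f \<in> cmap d ` S"
    then obtain p where p: "p \<in> S" "f = cmap d p" by blast
    then obtain e where e: "e > 0" "\<forall>q\<in>centered_monic d. close d e p q \<longrightarrow> q \<in> S" using R by blast
    show "\<exists>e>0. \<forall>g\<in>PiE {..<d - 1} (\<lambda>_. UNIV). (\<forall>i<d - 1. dist (g i) (f i) < e) \<longrightarrow> g \<in> cmap d ` S"
    proof (intro exI conjI ballI impI)
      show "e > 0" by fact
      fix g assume g: "g \<in> PiE {..<d - 1} (\<lambda>_. UNIV)" "\<forall>i<d - 1. dist (g i) (f i) < e"
      have "close d e p (pm d g)" using g(2) p(2) d by (auto simp: close_def coeff_pm cmap_def)
      then have "pm d g \<in> S" using e(2) pm_in[OF d] by blast
      then show "g \<in> cmap d ` S" using cmap_pm[OF g(1) d] by force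
    qed
  qed
  have "S = cmap d -` (cmap d ` S) \<inter> centered_monic d"
  proof
    show "S \<subseteq> cmap d -` (cmap d ` S) \<inter> centered_monic d" using R by blast
    show "cmap d -` (cmap d ` S) \<inter> centered_monic d \<subseteq> S"
    proof
      fix q assume "q \<in> cmap d -` (cmap d ` S) \<inter> centered_monic d"
      then obtain p where "p \<in> S" "cmap d q = cmap d p" "q \<in> centered_monic d" by auto
      then have "q = p" using pm_cmap[of q d] pm_cmap[of p d] R d by (metis subsetD)
      then show "q \<in> S" using \<open>p \<in> S\<close> by simp
    qed
  qed
  then show "openin (Poly_mt_top d) S"
    unfolding Poly_mt_top_def openin_pullback_topology cmap_def[symmetric] using o by blast
qed

lemma in_closure_Poly:
  assumes d: "1 \<le> d" and p: "p \<in> centered_monic d" and S: "S \<subseteq> centered_monic d"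
    and approx: "\<And>e. e > 0 \<Longrightarrow> \<exists>q\<in>S. close d e p q"
  shows "p \<in> Poly_mt_top d closure_of S"
  unfolding in_closure_of
proof (intro conjI allI impI)
  show "p \<in> topspace (Poly_mt_top d)" using p by (simp add: topspace_Poly)
  fix T assume T: "p \<in> T \<and> openin (Poly_mt_top d) T"
  then obtain e where e: "e > 0" "\<forall>q\<in>centered_monic d. close d e p q \<longrightarrow> q \<in> T"
    using openin_Poly[OF d] by blast
  obtain q where q: "q \<in> S" "close d e p q" using approx[OF e(1)] by blast
  show "\<exists>y. y \<in> S \<and> y \<in> T" using q e S by blast
qed


lemma closedin_Poly:
  assumes d: "1 \<le> d" and S: "S \<subseteq> centered_monic d"
    and out: "\<And>p. p \<in> centered_monic d \<Longrightarrow> p \<notin> S \<Longrightarrow> \<exists>e>0. \<forall>q\<in>centered_monic d. close d e p q \<longrightarrow> q \<notin> S"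
  shows "closedin (Poly_mt_top d) S"
  unfolding closedin_def topspace_Poly
proof (intro conjI)
  show "S \<subseteq> centered_monic d" by fact
  show "openin (Poly_mt_top d) (centered_monic d - S)"
    unfolding openin_Poly[OF d] using out by blast
qed

lemma continuous_cmap: "continuous_map (Poly_mt_top d) (Cn_top (d - 1)) (cmap d)"
proof -
  have "continuous_map (Poly_mt_top d) (Cn_top (d - 1)) (id \<circ> (\<lambda>p. restrict (coeff p) {..<d - 1}))"
    unfolding Poly_mt_top_def by (intro continuous_map_pullback continuous_map_id)
  then show ?thesis by (simp add: cmap_def[abs_def] comp_def)
qed

lemma continuous_pm: assumes d: "1 \<le> d" shows "continuous_map (Cn_top (d - 1)) (Poly_mt_top d) (pm d)"
  unfolding Poly_mt_top_def
proof (rule continuous_map_pullback')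
  show "continuous_map (Cn_top (d - 1)) (Cn_top (d - 1)) ((\<lambda>p. restrict (coeff p) {..<d - 1}) \<circ> pm d)"
  proof (rule continuous_map_eq[OF continuous_map_id])
    fix x assume "x \<in> topspace (Cn_top (d - 1))"
    then show "id x = ((\<lambda>p. restrict (coeff p) {..<d - 1}) \<circ> pm d) x"
      using cmap_pm[of x d] d by (simp add: topspace_Cn cmap_def)
  qed
  show "topspace (Cn_top (d - 1)) \<subseteq> pm d -` centered_monic d" using pm_in[OF d] by blast
qed

lemma compact_box:
  assumes d: "1 \<le> d"
  shows "compactin (Poly_mt_top d) {p \<in> centered_monic d. \<forall>k<d - 1. cmod (coeff p k) \<le> R}"
proof -
  have "compactin (Poly_mt_top d) (pm d ` PiE {..<d - 1} (\<lambda>_. cball 0 R))"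
    by (rule image_compactin[OF Cn_compact continuous_pm[OF d]]) simp
  moreover have "pm d ` PiE {..<d - 1} (\<lambda>_. cball 0 R) = {p \<in> centered_monic d. \<forall>k<d - 1. cmod (coeff p k) \<le> R}"
  proof
    show "pm d ` PiE {..<d - 1} (\<lambda>_. cball 0 R) \<subseteq> {p \<in> centered_monic d. \<forall>k<d - 1. cmod (coeff p k) \<le> R}"
    proof
      fix p assume "p \<in> pm d ` PiE {..<d - 1} (\<lambda>_. cball 0 R)"
      then obtain g where g: "g \<in> PiE {..<d - 1} (\<lambda>_. cball 0 R)" "p = pm d g" by blast
      have "\<forall>k<d - 1. cmod (coeff p k) \<le> R"
      proof (intro allI impI)
        fix k assume k: "k < d - 1"
        then have "k \<noteq> d" by linarith
        then have "coeff p k = g k" using k g(2) by (simp add: coeff_pm[OF d])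
        moreover have "g k \<in> cball 0 R" using g(1) k by (intro PiE_mem[of g]) auto
        ultimately show "cmod (coeff p k) \<le> R" by simp
      qed
      then show "p \<in> {p \<in> centered_monic d. \<forall>k<d - 1. cmod (coeff p k) \<le> R}" using g pm_in[OF d] by blast
    qed
    show "{p \<in> centered_monic d. \<forall>k<d - 1. cmod (coeff p k) \<le> R} \<subseteq> pm d ` PiE {..<d - 1} (\<lambda>_. cball 0 R)"
    proof
      fix p assume p: "p \<in> {p \<in> centered_monic d. \<forall>k<d - 1. cmod (coeff p k) \<le> R}"
      have "cmap d p \<in> PiE {..<d - 1} (\<lambda>_. cball 0 R)"
        unfolding cmap_def restrict_PiE_iff using p by simp
      moreover have "p = pm d (cmap d p)" using pm_cmap[of p d] p d by simp
      ultimately show "p \<in> pm d ` PiE {..<d - 1} (\<lambda>_. cball 0 R)" by (metis image_eqI)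
    qed
  qed
  ultimately show ?thesis by simp
qed

lemma continuous_coeff:
  assumes "k < d - 1"
  shows "continuous_map (Poly_mt_top d) euclidean (\<lambda>p. coeff p k)"
proof -
  have pr: "continuous_map (Cn_top (d - 1)) euclidean (\<lambda>x. x k)"
    unfolding Cn_top_def using assms by (intro continuous_map_product_projection) auto
  have "continuous_map (Poly_mt_top d) euclidean ((\<lambda>x. x k) \<circ> cmap d)"
    by (rule continuous_map_compose[OF continuous_cmap pr])
  then show ?thesis using assms by (simp add: comp_def cmap_def)
qed

lemma box_open:
  assumes d: "1 \<le> d"
  shows "openin (Poly_mt_top d) {q \<in> centered_monic d. close d e p q}"
proof -
  have "openin (Cn_top (d - 1)) (PiE {..<d - 1} (\<lambda>k. ball (coeff p k) e))"
    unfolding Cn_top_def by (subst openin_PiE) auto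
  then have "openin (Poly_mt_top d) {q \<in> topspace (Poly_mt_top d). cmap d q \<in> PiE {..<d - 1} (\<lambda>k. ball (coeff p k) e)}"
    by (rule openin_continuous_map_preimage[OF continuous_cmap])
  moreover have "{q \<in> topspace (Poly_mt_top d). cmap d q \<in> PiE {..<d - 1} (\<lambda>k. ball (coeff p k) e)}
      = {q \<in> centered_monic d. close d e p q}"
    by (auto simp: topspace_Poly cmap_def close_def PiE_iff dist_commute)
  ultimately show ?thesis by simp
qed



lemma poly_bound:
  fixes r :: "complex poly"
  assumes "cmod z \<le> R"
  shows "cmod (poly r z) \<le> (\<Sum>i\<le>degree r. cmod (coeff r i) * R ^ i)"
proof -
  have "cmod (poly r z) \<le> (\<Sum>i\<le>degree r. cmod (coeff r i * z ^ i))"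
    unfolding poly_altdef by (rule norm_sum)
  also have "\<dots> \<le> (\<Sum>i\<le>degree r. cmod (coeff r i) * R ^ i)"
    using assms by (intro sum_mono) (auto simp: norm_mult norm_power intro!: mult_left_mono power_mono)
  finally show ?thesis .
qed

lemma poly_sum_N:
  fixes r :: "complex poly"
  assumes "\<forall>k\<ge>N. coeff r k = 0"
  shows "poly r z = (\<Sum>i<N. coeff r i * z ^ i)"
proof (cases "r = 0")
  case True then show ?thesis by simp
next
  case False
  then have "coeff r (degree r) \<noteq> 0" by simp
  then have dg: "degree r < N" using assms by (meson not_le)
  have "poly r z = (\<Sum>i\<le>degree r. coeff r i * z ^ i)" by (rule poly_altdef)
  also have "\<dots> = (\<Sum>i<N. coeff r i * z ^ i)"
  proof (rule sum.mono_neutral_left)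
    show "finite {..<N}" by simp
    show "{..degree r} \<subseteq> {..<N}" using dg by auto
    show "\<forall>i\<in>{..<N} - {..degree r}. coeff r i * z ^ i = 0" by (auto simp: coeff_eq_0)
  qed
  finally show ?thesis .
qed

lemma poly_bound_N:
  fixes r :: "complex poly"
  assumes "\<forall>k\<ge>N. coeff r k = 0" "\<forall>k. cmod (coeff r k) \<le> e" "cmod z \<le> R"
  shows "cmod (poly r z) \<le> e * (\<Sum>i<N. R ^ i)"
proof -
  have "cmod (poly r z) \<le> (\<Sum>i<N. cmod (coeff r i * z ^ i))"
    unfolding poly_sum_N[OF assms(1)] by (rule norm_sum)
  also have "\<dots> \<le> (\<Sum>i<N. e * R ^ i)"
  proof (intro sum_mono)
    fix i
    have "cmod z ^ i \<le> R ^ i" using assms(3) by (intro power_mono) auto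
    moreover have "0 \<le> e" using assms(2) norm_ge_zero[of "coeff r 0"] by (meson order_trans)
    ultimately show "cmod (coeff r i * z ^ i) \<le> e * R ^ i"
      using assms(2) by (auto simp: norm_mult norm_power intro!: mult_mono)
  qed
  also have "\<dots> = e * (\<Sum>i<N. R ^ i)" by (simp add: sum_distrib_left)
  finally show ?thesis .
qed

lemma poly_prod_roots:
  fixes r :: "complex poly"
  obtains root where "\<And>z. poly r z = lead_coeff r * (\<Prod>i<degree r. z - root i)"
proof -
  obtain root where rt: "smult (lead_coeff r) (\<Prod>i<degree r. [:-root i, 1:]) = r"
    by (rule complex_poly_decompose')
  have "poly r z = lead_coeff r * (\<Prod>i<degree r. z - root i)" for z
  proof -
    have "poly r z = poly (smult (lead_coeff r) (\<Prod>i<degree r. [:-root i, 1:])) z" using rt by simp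
    also have "\<dots> = lead_coeff r * (\<Prod>i<degree r. z - root i)" by (simp add: poly_prod)
    finally show ?thesis .
  qed
  then show ?thesis using that by blast
qed

lemma near_root:
  fixes r :: "complex poly"
  assumes "r \<noteq> 0" "\<rho> > 0" "cmod (poly r z) < cmod (lead_coeff r) * \<rho> ^ degree r"
  shows "\<exists>w. poly r w = 0 \<and> cmod (z - w) < \<rho>"
proof (rule ccontr)
  assume N: "\<not> (\<exists>w. poly r w = 0 \<and> cmod (z - w) < \<rho>)"
  obtain root where rt: "\<And>z. poly r z = lead_coeff r * (\<Prod>i<degree r. z - root i)"
    using poly_prod_roots[of r] by blast
  have L: "lead_coeff r \<noteq> 0" using assms(1) by simp
  have "poly r (root i) = 0" if "i < degree r" for i
    unfolding rt using that by (auto intro!: prod_zero)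
  then have ge: "\<rho> \<le> cmod (z - root i)" if "i < degree r" for i using N that by (meson not_le)
  have "\<rho> ^ degree r = (\<Prod>i<degree r. \<rho>)" by simp
  also have "\<dots> \<le> (\<Prod>i<degree r. cmod (z - root i))"
    using ge assms(2) by (intro prod_mono) auto
  also have "\<dots> = cmod (\<Prod>i<degree r. z - root i)" by (simp add: prod_norm)
  finally have "cmod (lead_coeff r) * \<rho> ^ degree r \<le> cmod (poly r z)"
    unfolding rt norm_mult using L by (intro mult_left_mono) auto
  then show False using assms(3) by simp
qed

lemma cauchy_bound:
  fixes r :: "complex poly"
  assumes "r \<noteq> 0" "poly r z = 0"
  shows "cmod z \<le> 1 + (\<Sum>i<degree r. cmod (coeff r i)) / cmod (lead_coeff r)"
proof (rule ccontr)
  define m where "m = degree r"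
  define L where "L = lead_coeff r"
  define S where "S = (\<Sum>i<m. cmod (coeff r i))"
  assume "\<not> cmod z \<le> 1 + (\<Sum>i<degree r. cmod (coeff r i)) / cmod (lead_coeff r)"
  then have big: "cmod z > 1 + S / cmod L" by (simp add: S_def m_def L_def)
  have Lnz: "L \<noteq> 0" using assms(1) by (simp add: L_def)
  have S0: "S \<ge> 0" unfolding S_def by (simp add: sum_nonneg)
  have "S / cmod L \<ge> 0" using S0 by simp
  then have z1: "cmod z > 1" using big by linarith
  have LS: "cmod L * cmod z > S"
  proof -
    have "cmod L * cmod z > cmod L * (1 + S / cmod L)" using big Lnz by simp
    also have "cmod L * (1 + S / cmod L) = cmod L + S" using Lnz by (simp add: field_simps)
    finally show ?thesis using norm_ge_zero[of L] by linarith
  qed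
  have "poly r z = (\<Sum>i<Suc m. coeff r i * z ^ i)" unfolding poly_altdef m_def lessThan_Suc_atMost ..
  also have "\<dots> = (\<Sum>i<m. coeff r i * z ^ i) + L * z ^ m" by (simp add: L_def m_def)
  finally have eq: "L * z ^ m = - (\<Sum>i<m. coeff r i * z ^ i)" using assms(2) by (simp add: add_eq_0_iff)
  show False
  proof (cases "m = 0")
    case True then show False using eq Lnz by simp
  next
    case False
    have "cmod (L * z ^ m) \<le> (\<Sum>i<m. cmod (coeff r i * z ^ i))" unfolding eq norm_minus_cancel by (rule norm_sum)
    also have "\<dots> \<le> (\<Sum>i<m. cmod (coeff r i) * cmod z ^ (m - 1))"
    proof (intro sum_mono)
      fix i assume "i \<in> {..<m}"
      then have "cmod z ^ i \<le> cmod z ^ (m - 1)" using z1 by (intro power_increasing) auto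
      then show "cmod (coeff r i * z ^ i) \<le> cmod (coeff r i) * cmod z ^ (m - 1)"
        by (simp add: norm_mult norm_power mult_left_mono)
    qed
    also have "\<dots> = S * cmod z ^ (m - 1)" by (simp add: S_def sum_distrib_right)
    also have "\<dots> < cmod L * cmod z * cmod z ^ (m - 1)" proof (rule mult_strict_right_mono[OF LS])
      show "0 < cmod z ^ (m - 1)" using z1 by (intro zero_less_power) linarith
    qed
    also have "\<dots> = cmod (L * z ^ m)"
    proof -
      have "cmod z * cmod z ^ (m - 1) = cmod z ^ m" using False by (metis Suc_pred' neq0_conv power_Suc)
      then show ?thesis by (simp add: norm_mult norm_power mult.assoc)
    qed
    finally show False by simp
  qed
qed

lemma small_mult:
  fixes e K A :: real
  assumes "0 \<le> K" "0 < A" "0 \<le> e" "e \<le> A / (K + 1)"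
  shows "e * K < A"
proof -
  have "e * K \<le> A / (K + 1) * K" using assms by (intro mult_right_mono) auto
  also have "\<dots> < A"
  proof -
    have "A * K < A * (K + 1)" using assms by simp
    then show ?thesis using assms by (simp add: field_simps)
  qed
  finally show ?thesis .
qed


lemma cm_facts:
  assumes "p \<in> centered_monic d"
  shows "degree p = d" "coeff p d = 1" "coeff p (d - 1) = 0" "p \<noteq> 0"
  using assms by (auto simp: centered_monic_def)

lemma cm_pderiv:
  assumes p: "p \<in> centered_monic d" and d: "1 \<le> d"
  shows "degree (pderiv p) = d - 1" "lead_coeff (pderiv p) = of_nat d" "pderiv p \<noteq> 0"
proof -
  show dg: "degree (pderiv p) = d - 1" using cm_facts[OF p] by (simp add: degree_pderiv)
  have "coeff (pderiv p) (d - 1) = of_nat d"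
    using cm_facts[OF p] d by (simp add: coeff_pderiv)
  then show "lead_coeff (pderiv p) = of_nat d" using dg by simp
  then show "pderiv p \<noteq> 0" using d by auto
qed

lemma crit_d2:
  assumes p: "p \<in> centered_monic d" and d: "1 \<le> d" and w: "poly (pderiv p) w = 0"
  shows "2 \<le> d"
proof (rule ccontr)
  assume "\<not> 2 \<le> d"
  then have d1: "d = 1" using d by simp
  have "degree (pderiv p) = 0" using cm_pderiv[OF p d] d1 by simp
  then obtain a where a: "pderiv p = [:a:]" by (rule degree_eq_zeroE)
  have "a = 1" using cm_pderiv(2)[OF p d] a d1 by simp
  then show False using w a by simp
qed

lemma crit_d2':
  assumes p: "p \<in> centered_monic d" and d: "1 \<le> d" and v: "v \<in> critical_values p"
  shows "2 \<le> d"
  using v crit_d2[OF p d] by (auto simp: critical_values_def)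

lemma cm_diff:
  assumes p: "p \<in> centered_monic d" and q: "q \<in> centered_monic d" and c: "close d e p q" and e: "e > 0"
  shows "\<forall>k\<ge>d - 1. coeff (q - p) k = 0" "\<forall>k. cmod (coeff (q - p) k) \<le> e"
proof -
  show z: "\<forall>k\<ge>d - 1. coeff (q - p) k = 0"
  proof (intro allI impI)
    fix k assume k: "d - 1 \<le> k"
    then have "k = d - 1 \<or> k = d \<or> k > d" by linarith
    then show "coeff (q - p) k = 0"
      using cm_facts[OF p] cm_facts[OF q] coeff_eq_0[of p k] coeff_eq_0[of q k] by auto
  qed
  show "\<forall>k. cmod (coeff (q - p) k) \<le> e"
  proof
    fix k show "cmod (coeff (q - p) k) \<le> e"
    proof (cases "k < d - 1")
      case True then show ?thesis using c by (auto simp: close_def dist_norm intro: less_imp_le)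
    next
      case False then show ?thesis using z e by simp
    qed
  qed
qed

lemma cm_diff_deriv:
  assumes p: "p \<in> centered_monic d" and q: "q \<in> centered_monic d" and c: "close d e p q" and e: "e > 0"
  shows "\<forall>k\<ge>d - 1. coeff (pderiv (q - p)) k = 0" "\<forall>k. cmod (coeff (pderiv (q - p)) k) \<le> d * e"
proof -
  note cd = cm_diff[OF p q c e]
  show z: "\<forall>k\<ge>d - 1. coeff (pderiv (q - p)) k = 0"
    using cd(1) by (auto simp: coeff_pderiv)
  show "\<forall>k. cmod (coeff (pderiv (q - p)) k) \<le> d * e"
  proof
    fix k show "cmod (coeff (pderiv (q - p)) k) \<le> d * e"
    proof (cases "Suc k < d - 1")
      case True
      have "cmod (coeff (pderiv (q - p)) k) = real (Suc k) * cmod (coeff (q - p) (Suc k))"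
        by (simp only: coeff_pderiv norm_mult norm_of_nat)
      also have "\<dots> \<le> real d * e" using True cd(2) e by (intro mult_mono) auto
      finally show ?thesis .
    next
      case False then show ?thesis using cd(1) e by (simp add: coeff_pderiv)
    qed
  qed
qed

lemma crit_cont:
  assumes d: "1 \<le> d" and p: "p \<in> centered_monic d" and v: "v \<in> critical_values p" and \<eta>: "\<eta> > 0"
  shows "\<exists>e>0. \<forall>q\<in>centered_monic d. close d e p q \<longrightarrow> (\<exists>v'\<in>critical_values q. dist v' v < \<eta>)"
proof -
  obtain w where w: "poly (pderiv p) w = 0" "v = poly p w" using v by (auto simp: critical_values_def)
  have d2: "2 \<le> d" using crit_d2[OF p d w(1)] .
  obtain \<rho> where \<rho>: "\<rho> > 0" "\<And>z. dist z w < \<rho> \<Longrightarrow> dist (poly p z) (poly p w) < \<eta> / 2"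
  proof -
    have ic: "continuous (at w) (\<lambda>z. poly p z)" by simp
    have "\<eta> / 2 > 0" using \<eta> by simp
    then show ?thesis using ic that unfolding continuous_at_eps_delta by blast
  qed
  define \<rho>1 where "\<rho>1 = min \<rho> 1"
  have \<rho>1: "\<rho>1 > 0" "\<rho>1 \<le> \<rho>" "\<rho>1 \<le> 1" using \<rho> by (auto simp: \<rho>1_def)
  define K1 where "K1 = (\<Sum>i<d - 1. cmod w ^ i)"
  define K2 where "K2 = (\<Sum>i<d - 1. (cmod w + 1) ^ i)"
  have K: "K1 \<ge> 0" "K2 \<ge> 0" by (auto simp: K1_def K2_def intro: sum_nonneg)
  define e where "e = min (\<rho>1 ^ (d - 1) / (K1 + 1)) (\<eta> / 2 / (K2 + 1))"
  have e: "e > 0" using \<rho>1 \<eta> K by (auto simp: e_def)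
  have eK1: "e * K1 < \<rho>1 ^ (d - 1)" using K \<rho>1 e by (intro small_mult) (auto simp: e_def)
  have eK2: "e * K2 < \<eta> / 2" using K \<eta> e by (intro small_mult) (auto simp: e_def)
  show ?thesis
  proof (intro exI conjI ballI impI)
    show "e > 0" by fact
    fix q assume q: "q \<in> centered_monic d" and c: "close d e p q"
    note cdd = cm_diff_deriv[OF p q c e]
    note cd = cm_diff[OF p q c e]
    have "cmod (poly (pderiv (q - p)) w) \<le> (d * e) * K1"
      unfolding K1_def by (rule poly_bound_N[OF cdd]) simp
    moreover have "poly (pderiv (q - p)) w = poly (pderiv q) w" using w(1) by (simp add: pderiv_diff)
    ultimately have "cmod (poly (pderiv q) w) \<le> d * (e * K1)" by (simp add: mult.assoc)
    also have "\<dots> < cmod (lead_coeff (pderiv q)) * \<rho>1 ^ degree (pderiv q)"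
      using eK1 d cm_pderiv[OF q d] by simp
    finally obtain w' where w': "poly (pderiv q) w' = 0" "cmod (w - w') < \<rho>1"
      using near_root[OF cm_pderiv(3)[OF q d] \<rho>1(1)] by blast
    have "cmod w' \<le> cmod w + 1" using w'(2) \<rho>1 norm_triangle_ineq2[of w' w] by (simp add: norm_minus_commute)
    then have "cmod (poly (q - p) w') \<le> e * K2"
      unfolding K2_def by (rule poly_bound_N[OF cd])
    then have a: "cmod (poly q w' - poly p w') < \<eta> / 2" using eK2 by simp
    have "dist w' w < \<rho>" using w'(2) \<rho>1 by (simp add: dist_norm norm_minus_commute)
    then have "dist (poly p w') (poly p w) < \<eta> / 2" by (rule \<rho>(2))
    then have b: "dist (poly p w') v < \<eta> / 2" using w(2) by simp
    have "dist (poly q w') v \<le> dist (poly q w') (poly p w') + dist (poly p w') v" by (rule dist_triangle)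
    moreover have "dist (poly q w') (poly p w') = cmod (poly q w' - poly p w')" by (simp add: dist_norm)
    ultimately have "dist (poly q w') v < \<eta>" using a b by linarith
    moreover have "poly q w' \<in> critical_values q" using w'(1) by (auto simp: critical_values_def)
    ultimately show "\<exists>v'\<in>critical_values q. dist v' v < \<eta>" by blast
  qed
qed



lemma degree_sum_order:
  fixes q :: "complex poly"
  assumes "q \<noteq> 0"
  shows "degree q = (\<Sum>z\<in>{z. poly q z = 0}. order z q)"
proof -
  have fin: "finite {z. poly q z = 0}" using poly_roots_finite[OF assms] .
  have "degree q = degree (smult (lead_coeff q) (\<Prod>z|poly q z = 0. [:-z, 1:] ^ order z q))"
    using complex_poly_decompose[of q] by simp
  also have "\<dots> = degree (\<Prod>z|poly q z = 0. [:-z, 1:] ^ order z q)" using assms by simp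
  also have "\<dots> = (\<Sum>z\<in>{z. poly q z = 0}. degree ([:-z, 1:] ^ order z q))"
    by (rule degree_prod_eq_sum_degree) auto
  also have "\<dots> = (\<Sum>z\<in>{z. poly q z = 0}. order z q)"
    by (intro sum.cong refl) (simp add: degree_power_eq)
  finally show ?thesis .
qed

lemma coeff_linear_pow: "coeff ([:a, 1:] ^ Suc n) n = of_nat (Suc n) * (a :: complex)"
proof (induction n)
  case 0 then show ?case by simp
next
  case (Suc n)
  have "[:a, 1:] ^ Suc (Suc n) = smult a ([:a, 1:] ^ Suc n) + pCons 0 ([:a, 1:] ^ Suc n)"
    by (simp add: mult_pCons_left)
  then have "coeff ([:a, 1:] ^ Suc (Suc n)) (Suc n) = a * coeff ([:a, 1:] ^ Suc n) (Suc n) + coeff ([:a, 1:] ^ Suc n) n"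
    by simp
  also have "coeff ([:a, 1:] ^ Suc n) (Suc n) = 1" by (rule coeff_linear_power)
  finally show ?case using Suc by (simp add: algebra_simps)
qed

lemma single_crit:
  assumes p: "p \<in> centered_monic d" and d: "2 \<le> d"
    and single: "\<forall>v1\<in>critical_values p. \<forall>v2\<in>critical_values p. v1 = v2"
  shows "\<forall>k. 1 \<le> k \<and> k < d \<longrightarrow> coeff p k = 0"
proof -
  have d1: "1 \<le> d" using d by simp
  define p' where "p' = pderiv p"
  note pd = cm_pderiv[OF p d1, folded p'_def]
  define R where "R = {w. poly p' w = 0}"
  have finR: "finite R" unfolding R_def using poly_roots_finite[OF pd(3)] .
  obtain root where rt: "\<And>z. poly p' z = lead_coeff p' * (\<Prod>i<degree p'. z - root i)"
    using poly_prod_roots[of p'] by blast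
  have "poly p' (root 0) = 0" unfolding rt using pd(1) d by (auto intro!: prod_zero)
  then have w0R: "root 0 \<in> R" by (simp add: R_def)
  define w0 where "w0 = root 0"
  define v where "v = poly p w0"
  define r where "r = p - [:v:]"
  have "coeff [:v:] d = 0" using d by (cases d) auto
  then have cr: "coeff r d = 1" using cm_facts[OF p] d by (simp add: r_def)
  then have rnz: "r \<noteq> 0" by auto
  have "\<forall>i>d. coeff r i = 0"
  proof (intro allI impI)
    fix i assume i: "i > d"
    then have "coeff p i = 0" using cm_facts(1)[OF p] coeff_eq_0 by blast
    moreover have "coeff [:v:] i = 0" using i by (cases i) auto
    ultimately show "coeff r i = 0" by (simp add: r_def)
  qed
  then have "degree r \<le> d" by (rule degree_le)
  moreover have "d \<le> degree r" using cr by (intro le_degree) simp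
  ultimately have dr: "degree r = d" by simp
  have pr: "pderiv r = p'" by (simp add: r_def p'_def pderiv_diff)
  have rootr: "poly r w = 0" if "w \<in> R" for w
  proof -
    have "poly p w \<in> critical_values p" "poly p w0 \<in> critical_values p"
      using that w0R by (auto simp: critical_values_def R_def p'_def w0_def)
    then have "poly p w = v" using single by (auto simp: v_def)
    then show ?thesis by (simp add: r_def)
  qed
  have ord: "order w r = Suc (order w p')" if "w \<in> R" for w
    using order_pderiv[OF rnz rootr[OF that]] pr by simp
  have "(\<Sum>w\<in>R. order w r) \<le> (\<Sum>z\<in>{z. poly r z = 0}. order z r)"
    using rootr poly_roots_finite[OF rnz] by (intro sum_mono2) auto
  also have "\<dots> = d" using degree_sum_order[OF rnz] dr by simp
  finally have s1: "(\<Sum>w\<in>R. order w r) \<le> d" .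
  have "(\<Sum>w\<in>R. order w r) = (\<Sum>w\<in>R. order w p') + card R"
  proof -
    have "(\<Sum>w\<in>R. order w r) = (\<Sum>w\<in>R. order w p' + 1)" using ord by (intro sum.cong) auto
    also have "\<dots> = (\<Sum>w\<in>R. order w p') + card R" by (simp only: sum.distrib sum_constant) simp
    finally show ?thesis .
  qed
  also have "(\<Sum>w\<in>R. order w p') = d - 1" using degree_sum_order[OF pd(3)] pd(1) by (simp add: R_def)
  finally have "card R \<le> 1" using s1 d by simp
  then have "\<forall>a\<in>R. \<forall>b\<in>R. a = b" using card_le_Suc0_iff_eq[OF finR] by simp
  then have R1: "R = {w0}" using w0R unfolding w0_def by blast
  have ow: "order w0 p' = d - 1" using degree_sum_order[OF pd(3)] pd(1) R1 by (simp add: R_def)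
  have Z: "{z. poly p' z = 0} = {w0}" using R1 by (simp add: R_def)
  have "p' = smult (lead_coeff p') (\<Prod>z\<in>{w0}. [:-z, 1:] ^ order z p')"
    using complex_poly_decompose[of p'] unfolding Z by (rule sym)
  then have p'eq: "p' = smult (of_nat d) ([:-w0, 1:] ^ (d - 1))" using pd(2) ow by simp
  define m where "m = d - 2"
  have m: "d - 1 = Suc m" unfolding m_def using d by arith
  have "coeff p' m = of_nat (Suc m) * coeff p (Suc m)" by (simp add: p'_def coeff_pderiv)
  also have "coeff p (Suc m) = 0" using cm_facts(3)[OF p] m by simp
  finally have "coeff p' m = 0" by simp
  moreover have "coeff p' m = of_nat d * (of_nat (Suc m) * (- w0))"
    using p'eq m coeff_linear_pow[of "-w0" m] by simp
  ultimately have h: "of_nat d * (of_nat (Suc m) * (- w0)) = (0::complex)" by simp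
  have nz1: "(of_nat d::complex) \<noteq> 0" using d by auto
  have nz2: "(of_nat (Suc m)::complex) \<noteq> 0" by (simp only: of_nat_eq_0_iff)
  note nz = nz1 nz2
  have "w0 = 0" using h nz by (simp only: mult_eq_0_iff neg_equal_0_iff_equal) blast
  then have p'eq2: "p' = monom (of_nat d) (d - 1)" using p'eq by (simp add: monom_altdef)
  show ?thesis
  proof (intro allI impI)
    fix k assume k: "1 \<le> k \<and> k < d"
    then obtain j where j: "k = Suc j" by (cases k) auto
    have "of_nat (Suc j) * coeff p (Suc j) = coeff p' j" by (simp add: p'_def coeff_pderiv)
    also have "\<dots> = 0" using p'eq2 j k by simp
    finally have "of_nat (Suc j) * coeff p (Suc j) = 0" .
    moreover have "(of_nat (Suc j)::complex) \<noteq> 0" by (simp only: of_nat_eq_0_iff)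
    ultimately show "coeff p k = 0" using j by (simp only: mult_eq_0_iff) blast
  qed
qed


definition spread :: "real \<Rightarrow> complex poly set \<Rightarrow> bool" where
  "spread m Ob \<longleftrightarrow> (\<forall>q\<in>Ob. \<exists>v1\<in>critical_values q. \<exists>v2\<in>critical_values q. m \<le> dist v1 v2)"

lemma spread_Union:
  assumes "finite F" "\<forall>Ob\<in>F. \<exists>m>0. spread m Ob"
  shows "\<exists>m>0. spread m (\<Union>F)"
  using assms
proof (induction F rule: finite_induct)
  case empty then show ?case by (auto simp: spread_def intro: exI[of _ 1])
next
  case (insert Ob F)
  then obtain m1 where m1: "m1 > 0" "spread m1 Ob" by auto
  obtain m2 where m2: "m2 > 0" "spread m2 (\<Union>F)" using insert by auto
  have "spread (min m1 m2) (\<Union>(insert Ob F))"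
    using m1(2) m2(2) unfolding spread_def by (auto; meson min.coboundedI1 min.coboundedI2 order_trans)
  then show ?case using m1 m2 by (intro exI[of _ "min m1 m2"]) auto
qed

lemma uniform_spread:
  assumes d: "1 \<le> d" and A: "compactin (Poly_mt_top d) A" "A \<subseteq> centered_monic d"
    and two: "\<forall>p\<in>A. \<exists>v1\<in>critical_values p. \<exists>v2\<in>critical_values p. v1 \<noteq> v2"
  shows "\<exists>m>0. spread m A"
proof -
  define U where "U = {Ob. openin (Poly_mt_top d) Ob \<and> (\<exists>m>0. spread m Ob)}"
  have cover: "A \<subseteq> \<Union>U"
  proof
    fix p assume pA: "p \<in> A"
    then obtain v1 v2 where v: "v1 \<in> critical_values p" "v2 \<in> critical_values p" "v1 \<noteq> v2" using two by blast
    define \<mu> where "\<mu> = dist v1 v2"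
    have \<mu>: "\<mu> > 0" using v by (simp add: \<mu>_def)
    have p: "p \<in> centered_monic d" using pA A by blast
    obtain e1 where e1: "e1 > 0" "\<forall>q\<in>centered_monic d. close d e1 p q \<longrightarrow> (\<exists>v'\<in>critical_values q. dist v' v1 < \<mu> / 4)"
      using crit_cont[OF d p v(1), of "\<mu> / 4"] \<mu> by auto
    obtain e2 where e2: "e2 > 0" "\<forall>q\<in>centered_monic d. close d e2 p q \<longrightarrow> (\<exists>v'\<in>critical_values q. dist v' v2 < \<mu> / 4)"
      using crit_cont[OF d p v(2), of "\<mu> / 4"] \<mu> by auto
    define e where "e = min e1 e2"
    define Ob where "Ob = {q \<in> centered_monic d. close d e p q}"
    have "openin (Poly_mt_top d) Ob" unfolding Ob_def by (rule box_open[OF d])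
    moreover have "spread (\<mu> / 2) Ob"
      unfolding spread_def
    proof
      fix q assume "q \<in> Ob"
      then have q: "q \<in> centered_monic d" "close d e1 p q" "close d e2 p q"
        by (auto simp: Ob_def e_def close_def)
      obtain v1' where v1': "v1' \<in> critical_values q" "dist v1' v1 < \<mu> / 4" using e1(2) q by blast
      obtain v2' where v2': "v2' \<in> critical_values q" "dist v2' v2 < \<mu> / 4" using e2(2) q by blast
      have "\<mu> \<le> dist v1 v1' + dist v1' v2' + dist v2' v2"
        unfolding \<mu>_def by (metis dist_triangle add.commute add_le_cancel_left order_trans)
      then have "\<mu> / 2 \<le> dist v1' v2'" using v1'(2) v2'(2) by (simp add: dist_commute)
      then show "\<exists>v1\<in>critical_values q. \<exists>v2\<in>critical_values q. \<mu> / 2 \<le> dist v1 v2"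
        using v1'(1) v2'(1) by blast
    qed
    moreover have "p \<in> Ob" using p e1 e2 by (simp add: Ob_def close_def e_def)
    ultimately show "p \<in> \<Union>U" using \<mu> unfolding U_def
      by (intro UnionI[of Ob]) (auto intro!: exI[of _ "\<mu> / 2"])
  qed
  obtain F where F: "finite F" "F \<subseteq> U" "A \<subseteq> \<Union>F"
    using A(1) cover unfolding compactin_def U_def by (metis (no_types, lifting) mem_Collect_eq subsetD)
  have "\<forall>Ob\<in>F. \<exists>m>0. spread m Ob" using F(2) by (auto simp: U_def)
  then obtain m where "m > 0" "spread m (\<Union>F)" using spread_Union[OF F(1)] by blast
  then show ?thesis using F(3) unfolding spread_def by blast
qed



definition scalep :: "complex \<Rightarrow> complex \<Rightarrow> complex \<Rightarrow> complex poly \<Rightarrow> complex poly" where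
  "scalep a l b p = smult a (pcompose p [:0, l:]) + [:b:]"

lemma coeff_scalep: "coeff (scalep a l b p) k = a * l ^ k * coeff p k + (if k = 0 then b else 0)"
  by (cases k) (auto simp: scalep_def coeff_pcompose_linear poly_0_coeff_0)

lemma poly_scalep: "poly (scalep a l b p) z = a * poly p (l * z) + b"
  by (simp add: scalep_def poly_pcompose mult_ac)

lemma pderiv_scalep: "poly (pderiv (scalep a l b p)) z = a * (poly (pderiv p) (l * z) * l)"
  by (simp add: scalep_def pderiv_add pderiv_smult pderiv_pcompose pderiv_pCons poly_pcompose mult_ac)

lemma crit_scalep:
  assumes "a \<noteq> 0" "l \<noteq> 0" "v' \<in> critical_values (scalep a l b p)"
  shows "\<exists>v\<in>critical_values p. v' = a * v + b"
proof -
  obtain z where z: "poly (pderiv (scalep a l b p)) z = 0" "v' = poly (scalep a l b p) z"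
    using assms(3) by (auto simp: critical_values_def)
  have "poly (pderiv p) (l * z) = 0" using z(1) assms(1,2) by (simp add: pderiv_scalep)
  then have "poly p (l * z) \<in> critical_values p" by (auto simp: critical_values_def)
  moreover have "v' = a * poly p (l * z) + b" using z(2) by (simp add: poly_scalep)
  ultimately show ?thesis by blast
qed

lemma scalep_cm:
  assumes p: "p \<in> centered_monic d" and d: "2 \<le> d" and al: "a * l ^ d = 1"
  shows "scalep a l b p \<in> centered_monic d"
proof -
  note cf = cm_facts[OF p]
  have cd: "coeff (scalep a l b p) d = 1" using cf d al by (simp add: coeff_scalep)
  have "\<forall>i>d. coeff (scalep a l b p) i = 0"
    using cf coeff_eq_0[of p] by (auto simp: coeff_scalep)
  then have "degree (scalep a l b p) \<le> d" by (rule degree_le)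
  moreover have "d \<le> degree (scalep a l b p)" using cd by (intro le_degree) simp
  ultimately have "degree (scalep a l b p) = d" by simp
  moreover have "coeff (scalep a l b p) (d - 1) = 0" using cf d by (simp add: coeff_scalep)
  ultimately show ?thesis using cd by (simp add: centered_monic_def)
qed


lemma crit_exists:
  assumes p: "p \<in> centered_monic d" and d: "2 \<le> d"
  shows "\<exists>w. poly (pderiv p) w = 0"
proof -
  have d1: "1 \<le> d" using d by simp
  obtain root where rt: "\<And>z. poly (pderiv p) z = lead_coeff (pderiv p) * (\<Prod>i<degree (pderiv p). z - root i)"
    using poly_prod_roots[of "pderiv p"] by blast
  have "poly (pderiv p) (root 0) = 0" unfolding rt using cm_pderiv(1)[OF p d1] d by (auto intro!: prod_zero)
  then show ?thesis by blast
qed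

definition Aset :: "nat \<Rightarrow> complex poly set" where
  "Aset d = {p \<in> centered_monic d. coeff p 0 = 0 \<and> (\<forall>k<d - 1. cmod (coeff p k) \<le> 1) \<and>
      (\<exists>k. 1 \<le> k \<and> k < d - 1 \<and> cmod (coeff p k) = 1)}"

lemma Aset_compact:
  assumes d: "2 \<le> d"
  shows "compactin (Poly_mt_top d) (Aset d)"
proof -
  have d1: "1 \<le> d" using d by simp
  define Z0 where "Z0 = {p \<in> topspace (Poly_mt_top d). coeff p 0 \<in> {0}}"
  define S where "S = (\<lambda>k. {p \<in> topspace (Poly_mt_top d). coeff p k \<in> sphere 0 1})"
  have cZ0: "closedin (Poly_mt_top d) Z0" unfolding Z0_def
    using d by (intro closedin_continuous_map_preimage[OF continuous_coeff]) (auto simp: closed_closedin[symmetric])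
  have cS: "closedin (Poly_mt_top d) (S k)" if "k < d - 1" for k unfolding S_def
    using that by (intro closedin_continuous_map_preimage[OF continuous_coeff]) (auto simp: closed_closedin[symmetric])
  have cU: "closedin (Poly_mt_top d) (\<Union>(S ` {1..<d - 1}))"
    by (intro closedin_Union) (auto intro: cS)
  have "compactin (Poly_mt_top d) ((Z0 \<inter> \<Union>(S ` {1..<d - 1})) \<inter> {p \<in> centered_monic d. \<forall>k<d - 1. cmod (coeff p k) \<le> 1})"
    by (intro closed_Int_compactin closedin_Int cZ0 cU compact_box d1)
  moreover have "(Z0 \<inter> \<Union>(S ` {1..<d - 1})) \<inter> {p \<in> centered_monic d. \<forall>k<d - 1. cmod (coeff p k) \<le> 1} = Aset d"
    by (auto simp: Z0_def S_def Aset_def topspace_Poly)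
  ultimately show ?thesis by simp
qed

lemma Aset_two:
  assumes d: "2 \<le> d" and p: "p \<in> Aset d"
  shows "\<exists>v1\<in>critical_values p. \<exists>v2\<in>critical_values p. v1 \<noteq> v2"
proof (rule ccontr)
  assume "\<not> ?thesis"
  then have "\<forall>v1\<in>critical_values p. \<forall>v2\<in>critical_values p. v1 = v2" by blast
  moreover have pc: "p \<in> centered_monic d" using p by (simp add: Aset_def)
  ultimately have z: "\<forall>k. 1 \<le> k \<and> k < d \<longrightarrow> coeff p k = 0" using single_crit d by blast
  obtain k where "1 \<le> k" "k < d - 1" "cmod (coeff p k) = 1" using p by (auto simp: Aset_def)
  then show False using z by auto
qed


lemma mid_coeff_bound:
  assumes d: "2 \<le> d" and M: "Ubar \<subseteq> cball 0 M"
  shows "\<exists>C\<ge>1. \<forall>p\<in>Poly_mt d Ubar. \<forall>k. 1 \<le> k \<and> k < d - 1 \<longrightarrow> cmod (coeff p k) \<le> C"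
proof -
  have d1: "1 \<le> d" using d by simp
  obtain m where m: "m > 0" "spread m (Aset d)"
    using uniform_spread[OF d1 Aset_compact[OF d]] Aset_two[OF d] by (auto simp: Aset_def)
  define C where "C = max 1 (2 * M / m)"
  have C1: "C \<ge> 1" by (simp add: C_def)
  show ?thesis
  proof (intro exI conjI ballI allI impI)
    show "C \<ge> 1" by fact
    fix p k assume pU: "p \<in> Poly_mt d Ubar" and k: "1 \<le> k \<and> k < d - 1"
    have p: "p \<in> centered_monic d" and cvU: "critical_values p \<subseteq> Ubar" using pU by (auto simp: Poly_mt_def)
    define K where "K = {1..<d - 1}"
    define rt where "rt = (\<lambda>j. root (d - j) (cmod (coeff p j)))"
    define N where "N = Max (insert 0 (rt ` K))"
    have finK: "finite (insert 0 (rt ` K))" by (simp add: K_def)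
    have N0: "N \<ge> 0" unfolding N_def using finK by (intro Max_ge) auto
    have rtN: "rt j \<le> N" if "j \<in> K" for j unfolding N_def using finK that by (intro Max_ge) auto
    have rt0: "rt j \<ge> 0" for j by (simp add: rt_def real_root_ge_zero)
    have rtpow: "rt j ^ (d - j) = cmod (coeff p j)" if "j \<in> K" for j
    proof -
      have "0 < d - j" using that by (auto simp: K_def)
      then show ?thesis unfolding rt_def by (rule real_root_pow_pos2) simp
    qed
    have ckN: "cmod (coeff p j) \<le> N ^ (d - j)" if "j \<in> K" for j
      using rtpow[OF that] power_mono[OF rtN[OF that] rt0[of j], of "d - j"] by simp
    have kK: "k \<in> K" using k by (simp add: K_def)
    show "cmod (coeff p k) \<le> C"
    proof (cases "N = 0")
      case True
      have "d - k \<noteq> 0" using k by auto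
      then have z: "N ^ (d - k) = 0" using True by simp
      have "cmod (coeff p k) \<le> N ^ (d - k)" using ckN[OF kK] .
      then have "cmod (coeff p k) \<le> 0" unfolding z .
      then show ?thesis using C1 by simp
    next
      case False
      then have Npos: "N > 0" using N0 by simp
      have "N \<in> insert 0 (rt ` K)" unfolding N_def using finK by (intro Max_in) auto
      then obtain k0 where k0: "k0 \<in> K" "rt k0 = N" using False by auto
      define l where "l = complex_of_real N"
      define a where "a = 1 / l ^ d"
      define b where "b = - coeff p 0 / l ^ d"
      have lnz: "l \<noteq> 0" using Npos by (simp add: l_def)
      have anz: "a \<noteq> 0" using lnz by (simp add: a_def)
      have al: "a * l ^ d = 1" using lnz by (simp add: a_def)
      define pt where "pt = scalep a l b p"
      have ptc: "pt \<in> centered_monic d" unfolding pt_def by (rule scalep_cm[OF p d al])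
      have cpt: "cmod (coeff pt j) = cmod (coeff p j) / N ^ (d - j)" if "j \<in> K" for j
      proof -
        have j: "1 \<le> j" "j < d" using that by (auto simp: K_def)
        have "N ^ d = N ^ j * N ^ (d - j)" using j by (simp flip: power_add)
        then have "N ^ j / N ^ d = 1 / N ^ (d - j)" using Npos by (simp add: field_simps)
        moreover have "coeff pt j = a * l ^ j * coeff p j" using j by (simp add: pt_def coeff_scalep)
        moreover have "cmod (coeff pt j) = N ^ j * cmod (coeff p j) / N ^ d"
          using calculation(2) Npos by (simp add: a_def l_def norm_mult norm_divide norm_power)
        moreover have "N ^ j * cmod (coeff p j) / N ^ d = (N ^ j / N ^ d) * cmod (coeff p j)" by simp
        ultimately show ?thesis by simp
      qed
      have "pt \<in> Aset d"
        unfolding Aset_def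
      proof (intro CollectI conjI allI impI)
        show "pt \<in> centered_monic d" by fact
        show "coeff pt 0 = 0" using lnz by (simp add: pt_def coeff_scalep a_def b_def)
        fix j assume j: "j < d - 1"
        show "cmod (coeff pt j) \<le> 1"
        proof (cases "j = 0")
          case True then show ?thesis using lnz by (simp add: pt_def coeff_scalep a_def b_def)
        next
          case False
          then have jK: "j \<in> K" using j by (simp add: K_def)
          show ?thesis unfolding cpt[OF jK] using ckN[OF jK] Npos by (simp add: divide_le_eq)
        qed
      next
        have "cmod (coeff pt k0) = 1"
          unfolding cpt[OF k0(1)] rtpow[OF k0(1), symmetric] k0(2) using Npos by simp
        then show "\<exists>j. 1 \<le> j \<and> j < d - 1 \<and> cmod (coeff pt j) = 1" using k0(1) by (auto simp: K_def)
      qed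
      then obtain v1' v2' where v': "v1' \<in> critical_values pt" "v2' \<in> critical_values pt" "m \<le> dist v1' v2'"
        using m(2) unfolding spread_def by blast
      obtain v1 where v1: "v1 \<in> critical_values p" "v1' = a * v1 + b" using crit_scalep[OF anz lnz] v'(1) pt_def by blast
      obtain v2 where v2: "v2 \<in> critical_values p" "v2' = a * v2 + b" using crit_scalep[OF anz lnz] v'(2) pt_def by blast
      have "dist v1' v2' = cmod (v1 - v2) / N ^ d"
      proof -
        have "v1' - v2' = a * (v1 - v2)" using v1 v2 by (simp add: algebra_simps)
        then show ?thesis using Npos by (simp add: dist_norm a_def l_def norm_mult norm_divide norm_power)
      qed
      moreover have "cmod (v1 - v2) \<le> 2 * M"
      proof -
        have "cmod v1 \<le> M" "cmod v2 \<le> M" using v1(1) v2(1) cvU M by (auto simp: subset_iff)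
        then show ?thesis using norm_triangle_ineq4[of v1 v2] by simp
      qed
      ultimately have "m \<le> 2 * M / N ^ d" using v'(3) Npos by (simp add: divide_right_mono order_trans)
      then have Nd: "N ^ d \<le> 2 * M / m" using m(1) Npos by (simp add: field_simps)
      have "N ^ (d - k) \<le> max 1 (N ^ d)"
      proof (cases "N \<le> 1")
        case True then have "N ^ (d - k) \<le> 1" using N0 by (simp add: power_le_one)
        then show ?thesis by simp
      next
        case False then have "N ^ (d - k) \<le> N ^ d" by (intro power_increasing) auto
        then show ?thesis by simp
      qed
      also have "\<dots> \<le> C" using Nd by (auto simp: C_def)
      finally show ?thesis using ckN[OF kK] by simp
    qed
  qed
qed


lemma coeff_const_poly: "coeff [:c:] k = (if k = 0 then c else 0)"
  by (cases k) auto

lemma coeff_bound: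
  assumes d1: "1 \<le> d" and M: "Ubar \<subseteq> cball 0 M"
  shows "\<exists>R. \<forall>p\<in>Poly_mt d Ubar. \<forall>k<d - 1. cmod (coeff p k) \<le> R"
proof (cases "d = 1")
  case True then show ?thesis by auto
next
  case False
  then have d: "2 \<le> d" using d1 by simp
  obtain C where C: "C \<ge> 1" "\<forall>p\<in>Poly_mt d Ubar. \<forall>k. 1 \<le> k \<and> k < d - 1 \<longrightarrow> cmod (coeff p k) \<le> C"
    using mid_coeff_bound[OF d M] by blast
  define W where "W = 1 + real (d - 1) * C"
  define R where "R = max C (M + C * (\<Sum>i<d + 1. W ^ i))"
  show ?thesis
  proof (intro exI ballI allI impI)
    fix p k assume pU: "p \<in> Poly_mt d Ubar" and k: "k < d - 1"
    have p: "p \<in> centered_monic d" and cvU: "critical_values p \<subseteq> Ubar" using pU by (auto simp: Poly_mt_def)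
    note cf = cm_facts[OF p]
    have Cp: "cmod (coeff p j) \<le> C" if "1 \<le> j" "j < d - 1" for j using C(2) pU that by blast
    show "cmod (coeff p k) \<le> R"
    proof (cases "k = 0")
      case False then show ?thesis using Cp[of k] k by (simp add: R_def)
    next
      case True
      obtain w where w: "poly (pderiv p) w = 0" using crit_exists[OF p d] by blast
      note pd = cm_pderiv[OF p d1]
      have "cmod w \<le> 1 + (\<Sum>i<degree (pderiv p). cmod (coeff (pderiv p) i)) / cmod (lead_coeff (pderiv p))"
        by (rule cauchy_bound[OF pd(3) w])
      also have "\<dots> = 1 + (\<Sum>i<d - 1. cmod (coeff (pderiv p) i)) / real d" using pd by simp
      also have "\<dots> \<le> 1 + (\<Sum>i<d - 1. real d * C) / real d"
      proof -
        have "(\<Sum>i<d - 1. cmod (coeff (pderiv p) i)) \<le> (\<Sum>i<d - 1. real d * C)"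
        proof (intro sum_mono)
          fix i assume i: "i \<in> {..<d - 1}"
          have eq: "cmod (coeff (pderiv p) i) = real (Suc i) * cmod (coeff p (Suc i))"
            by (simp only: coeff_pderiv norm_mult norm_of_nat)
          show "cmod (coeff (pderiv p) i) \<le> real d * C"
          proof (cases "Suc i < d - 1")
            case True
            have "real (Suc i) * cmod (coeff p (Suc i)) \<le> real d * C"
              using Cp[of "Suc i"] True by (intro mult_mono) auto
            then show ?thesis using eq by simp
          next
            case False
            then have "Suc i = d - 1" using i by simp
            then show ?thesis using eq cf(3) C(1) by simp
          qed
        qed
        then have "(\<Sum>i<d - 1. cmod (coeff (pderiv p) i)) / real d \<le> (\<Sum>i<d - 1. real d * C) / real d"
          using d by (intro divide_right_mono) auto
        then show ?thesis by simp
      qed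
      also have "\<dots> = W" using d by (simp add: W_def)
      finally have wW: "cmod w \<le> W" .
      define r where "r = p - [:coeff p 0:]"
      have r1: "\<forall>j\<ge>d + 1. coeff r j = 0"
        using coeff_eq_0[of p] cf(1) by (auto simp: r_def coeff_const_poly)
      have r2: "\<forall>j. cmod (coeff r j) \<le> C"
      proof
        fix j
        have "j = 0 \<or> (1 \<le> j \<and> j < d - 1) \<or> j = d - 1 \<or> j = d \<or> j > d" by linarith
        then show "cmod (coeff r j) \<le> C"
          using Cp[of j] cf C(1) coeff_eq_0[of p j] by (auto simp: r_def coeff_const_poly)
      qed
      have "cmod (poly r w) \<le> C * (\<Sum>i<d + 1. W ^ i)" by (rule poly_bound_N[OF r1 r2 wW])
      moreover have "cmod (poly p w) \<le> M"
      proof -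
        have "poly p w \<in> critical_values p" using w by (auto simp: critical_values_def)
        then show ?thesis using cvU M by (auto simp: subset_iff)
      qed
      moreover have "coeff p 0 = poly p w - poly r w" by (simp add: r_def)
      ultimately have "cmod (coeff p 0) \<le> M + C * (\<Sum>i<d + 1. W ^ i)"
        using norm_triangle_ineq4[of "poly p w" "poly r w"] by simp
      then show ?thesis using True by (simp add: R_def)
    qed
  qed
qed



lemma Poly_closed:
  assumes d: "1 \<le> d" and cl: "closed Ubar"
  shows "closedin (Poly_mt_top d) (Poly_mt d Ubar)"
proof (rule closedin_Poly[OF d])
  show "Poly_mt d Ubar \<subseteq> centered_monic d" by (auto simp: Poly_mt_def)
  fix p assume p: "p \<in> centered_monic d" "p \<notin> Poly_mt d Ubar"
  then obtain v where v: "v \<in> critical_values p" "v \<notin> Ubar" by (auto simp: Poly_mt_def)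
  obtain \<eta> where \<eta>: "\<eta> > 0" "ball v \<eta> \<inter> Ubar = {}"
    using cl v(2) by (metis open_Compl open_contains_ball_eq ComplI disjoint_eq_subset_Compl)
  obtain e where e: "e > 0" "\<forall>q\<in>centered_monic d. close d e p q \<longrightarrow> (\<exists>v'\<in>critical_values q. dist v' v < \<eta>)"
    using crit_cont[OF d p(1) v(1) \<eta>(1)] by blast
  show "\<exists>e>0. \<forall>q\<in>centered_monic d. close d e p q \<longrightarrow> q \<notin> Poly_mt d Ubar"
  proof (intro exI conjI ballI impI)
    show "e > 0" by fact
    fix q assume "q \<in> centered_monic d" "close d e p q"
    then obtain v' where "v' \<in> critical_values q" "dist v' v < \<eta>" using e by blast
    then have "v' \<in> critical_values q" "v' \<in> ball v \<eta>" by (auto simp: dist_commute)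
    then have "v' \<in> critical_values q" "v' \<notin> Ubar" using \<eta>(2) by blast+
    then show "q \<notin> Poly_mt d Ubar" by (auto simp: Poly_mt_def)
  qed
qed

lemma density_star:
  assumes d1: "1 \<le> d" and p: "p \<in> Poly_mt d Ubar"
    and star: "\<forall>x\<in>Ubar. \<forall>s::real. 0 < s \<and> s < 1 \<longrightarrow> c + complex_of_real s * (x - c) \<in> U"
    and e: "e > 0"
  shows "\<exists>q\<in>Poly_mt d U. close d e p q"
proof (cases "critical_values p = {}")
  case True
  then have "p \<in> Poly_mt d U" using p by (auto simp: Poly_mt_def)
  moreover have "close d e p p" using e by (simp add: close_def)
  ultimately show ?thesis by blast
next
  case False
  have pc: "p \<in> centered_monic d" and cvU: "critical_values p \<subseteq> Ubar" using p by (auto simp: Poly_mt_def)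
  have d: "2 \<le> d" using False crit_d2'[OF pc d1] by blast
  define Q where "Q = (\<lambda>s::real. scalep (complex_of_real s) (complex_of_real (s powr (-1 / real d))) (complex_of_real (1 - s) * c) p)"
  have coeffQ: "coeff (Q s) k = complex_of_real s * complex_of_real (s powr (-1 / real d)) ^ k * coeff p k
      + (if k = 0 then complex_of_real (1 - s) * c else 0)" for s k
    by (simp add: Q_def coeff_scalep)
  have lim: "((\<lambda>s. coeff (Q s) k) \<longlongrightarrow> coeff p k) (at_left 1)" for k
  proof (cases "k = 0")
    case True
    have "((\<lambda>s. complex_of_real s * complex_of_real (s powr (-1 / real d)) ^ k * coeff p k + complex_of_real (1 - s) * c)
        \<longlongrightarrow> complex_of_real 1 * complex_of_real (1 powr (-1 / real d)) ^ k * coeff p k + complex_of_real (1 - 1) * c) (at_left 1)"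
      by (intro tendsto_intros) auto
    then show ?thesis using True by (simp add: coeffQ)
  next
    case False
    have "((\<lambda>s. complex_of_real s * complex_of_real (s powr (-1 / real d)) ^ k * coeff p k)
        \<longlongrightarrow> complex_of_real 1 * complex_of_real (1 powr (-1 / real d)) ^ k * coeff p k) (at_left 1)"
      by (intro tendsto_intros) auto
    then show ?thesis using False by (simp add: coeffQ)
  qed
  have ev1: "eventually (\<lambda>s. \<forall>k\<in>{..<d - 1}. dist (coeff (Q s) k) (coeff p k) < e) (at_left 1)"
    using lim e by (intro eventually_ball_finite) (auto simp: tendsto_iff)
  have ev2: "eventually (\<lambda>s. s \<in> {0<..<1::real}) (at_left 1)" by (rule eventually_at_left_real) simp
  obtain s where s: "0 < s" "s < 1" "\<forall>k\<in>{..<d - 1}. dist (coeff (Q s) k) (coeff p k) < e"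
    using eventually_happens[OF eventually_conj[OF ev1 ev2]] by auto
  define l where "l = s powr (-1 / real d)"
  have lpos: "l > 0" using s by (simp add: l_def)
  have "l ^ d = s powr (real d * (-1 / real d))" unfolding l_def using s by (simp add: powr_power)
  also have "\<dots> = 1 / s" using d s by (simp add: powr_minus_divide)
  finally have ld: "s * l ^ d = 1" using s by simp
  have al: "complex_of_real s * complex_of_real l ^ d = 1"
    by (metis ld of_real_1 of_real_mult of_real_power)
  have Qc: "Q s \<in> centered_monic d" unfolding Q_def l_def[symmetric] by (rule scalep_cm[OF pc d al])
  have "critical_values (Q s) \<subseteq> U"
  proof
    fix v' assume "v' \<in> critical_values (Q s)"
    then have v'in: "v' \<in> critical_values (scalep (complex_of_real s) (complex_of_real l) (complex_of_real (1 - s) * c) p)"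
      unfolding Q_def l_def .
    have nz: "complex_of_real s \<noteq> 0" "complex_of_real l \<noteq> 0" using s lpos by auto
    obtain v where v: "v \<in> critical_values p" "v' = complex_of_real s * v + complex_of_real (1 - s) * c"
      using crit_scalep[OF nz v'in] by blast
    have "v' = c + complex_of_real s * (v - c)" using v(2) by (simp add: algebra_simps)
    then show "v' \<in> U" using star v(1) cvU s by blast
  qed
  then have "Q s \<in> Poly_mt d U" using Qc by (simp add: Poly_mt_def)
  moreover have "close d e p (Q s)" using s(3) by (simp add: close_def)
  ultimately show ?thesis by blast
qed



lemma lagrange_interp:
  fixes f :: "complex \<Rightarrow> complex"
  assumes "finite S"
  shows "\<exists>h. (\<forall>k\<ge>card S. coeff h k = 0) \<and> (\<forall>x\<in>S. poly h x = f x)"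
  using assms
proof (induction S rule: finite_induct)
  case empty then show ?case by (intro exI[of _ 0]) auto
next
  case (insert a S)
  then obtain h where h: "\<forall>k\<ge>card S. coeff h k = 0" "\<forall>x\<in>S. poly h x = f x" by blast
  define g where "g = (\<Prod>x\<in>S. [:-x, 1:])"
  have pg: "poly g z = (\<Prod>x\<in>S. z - x)" for z by (simp add: g_def poly_prod)
  have ga: "poly g a \<noteq> 0" using insert(1,2) by (auto simp: pg)
  have gS: "poly g x = 0" if "x \<in> S" for x using insert(1) that by (auto simp: pg intro!: prod_zero)
  have dg: "degree g = card S" unfolding g_def
    by (subst degree_prod_eq_sum_degree) auto
  define h2 where "h2 = h + smult ((f a - poly h a) / poly g a) g"
  show ?case
  proof (intro exI conjI ballI allI impI)
    fix k assume "card (insert a S) \<le> k"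
    then have k: "card S < k" using insert(1,2) by simp
    then show "coeff h2 k = 0" using h(1) coeff_eq_0[of g k] dg by (simp add: h2_def)
  next
    fix x assume "x \<in> insert a S"
    then show "poly h2 x = f x" using h(2) gS ga by (auto simp: h2_def)
  qed
qed

lemma card_roots_le:
  fixes q :: "complex poly"
  assumes "q \<noteq> 0"
  shows "card {z. poly q z = 0} \<le> degree q"
proof -
  have "card {z. poly q z = 0} = (\<Sum>z\<in>{z. poly q z = 0}. 1)" by simp
  also have "\<dots> \<le> (\<Sum>z\<in>{z. poly q z = 0}. order z q)"
    using assms by (intro sum_mono) (auto simp: order_root Suc_le_eq)
  also have "\<dots> = degree q" using degree_sum_order[OF assms] by simp
  finally show ?thesis .
qed

lemma min_sep:
  fixes Rt :: "complex set"
  assumes "finite Rt"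
  shows "\<exists>\<sigma>>0. \<forall>x\<in>Rt. \<forall>y\<in>Rt. x \<noteq> y \<longrightarrow> \<sigma> \<le> dist x y"
proof -
  define S2 where "S2 = (\<lambda>(x, y). dist x y) ` {(x, y). x \<in> Rt \<and> y \<in> Rt \<and> x \<noteq> y}"
  have fin: "finite (insert 1 S2)" unfolding S2_def using assms
    by (intro finite_insert[THEN iffD2] finite_imageI) (auto intro: finite_subset[of _ "Rt \<times> Rt"])
  define \<sigma> where "\<sigma> = Min (insert 1 S2)"
  have "\<sigma> > 0" unfolding \<sigma>_def using fin by (subst Min_gr_iff) (auto simp: S2_def)
  moreover have "\<sigma> \<le> dist x y" if "x \<in> Rt" "y \<in> Rt" "x \<noteq> y" for x y
    unfolding \<sigma>_def using fin that by (intro Min_le) (auto simp: S2_def)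
  ultimately show ?thesis by blast
qed

lemma uniform_cont_finite:
  fixes h :: "complex poly"
  assumes "finite Rt" "\<epsilon> > 0"
  shows "\<exists>\<rho>>0. \<forall>w\<in>Rt. \<forall>z. cmod (z - w) < \<rho> \<longrightarrow> cmod (poly h z - poly h w) < \<epsilon>"
proof -
  have "\<forall>w\<in>Rt. \<exists>\<rho>>0. \<forall>z. dist z w < \<rho> \<longrightarrow> dist (poly h z) (poly h w) < \<epsilon>"
  proof
    fix w
    have "continuous (at w) (\<lambda>z. poly h z)" by simp
    then show "\<exists>\<rho>>0. \<forall>z. dist z w < \<rho> \<longrightarrow> dist (poly h z) (poly h w) < \<epsilon>"
      using assms(2) unfolding continuous_at_eps_delta by blast
  qed
  then obtain r where r: "\<And>w. w \<in> Rt \<Longrightarrow> r w > 0 \<and> (\<forall>z. dist z w < r w \<longrightarrow> dist (poly h z) (poly h w) < \<epsilon>)"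
    by metis
  define \<rho> where "\<rho> = Min (insert 1 (r ` Rt))"
  have "\<rho> > 0" unfolding \<rho>_def using assms(1) r by (subst Min_gr_iff) auto
  moreover have "\<rho> \<le> r w" if "w \<in> Rt" for w unfolding \<rho>_def using assms(1) that by (intro Min_le) auto
  ultimately show ?thesis using r by (metis dist_norm order_less_le_trans)
qed


lemma prod_two_bound:
  fixes a b :: "nat \<Rightarrow> real"
  assumes "\<And>i. i < n \<Longrightarrow> 0 \<le> a i \<and> a i \<le> 2 * b i"
  shows "(\<Prod>i<n. a i) \<le> 2 ^ n * (\<Prod>i<n. b i)"
proof -
  have "(\<Prod>i<n. a i) \<le> (\<Prod>i<n. 2 * b i)" using assms by (intro prod_mono) auto
  also have "\<dots> = 2 ^ n * (\<Prod>i<n. b i)" by (simp add: prod.distrib)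
  finally show ?thesis .
qed

lemma perturb:
  fixes \<delta> :: "complex \<Rightarrow> complex"
  assumes d: "2 \<le> d" and p: "p \<in> centered_monic d" and \<kappa>: "\<kappa> > 0" and e: "e > 0"
  shows "\<exists>q\<in>centered_monic d. close d e p q \<and> (\<exists>t. 0 < t \<and> t \<le> 1 \<and>
           (\<forall>v'\<in>critical_values q. \<exists>v\<in>critical_values p. cmod (v' - (v + complex_of_real t * \<delta> v)) < \<kappa> * t))"
proof -
  have d1: "1 \<le> d" using d by simp
  define p' where "p' = pderiv p"
  note pd = cm_pderiv[OF p d1, folded p'_def]
  define Rt where "Rt = {w. poly p' w = 0}"
  have finRt: "finite Rt" unfolding Rt_def using poly_roots_finite[OF pd(3)] .
  have cardRt: "card Rt \<le> d - 1" unfolding Rt_def using card_roots_le[OF pd(3)] pd(1) by simp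
  obtain h where h: "\<forall>k\<ge>card Rt. coeff h k = 0" "\<forall>x\<in>Rt. poly h x = \<delta> (poly p x)"
    using lagrange_interp[OF finRt, of "\<lambda>x. \<delta> (poly p x)"] by blast
  have h0: "coeff h k = 0" if "k \<ge> d - 1" for k using h(1) cardRt that by simp
  define h' where "h' = pderiv h"
  define Hc where "Hc = (\<Sum>k<d - 1. cmod (coeff h k))"
  define B where "B = 1 + (\<Sum>i<d - 1. cmod (coeff p' i) + cmod (coeff h' i)) / real d"
  define H1 where "H1 = (\<Sum>i\<le>degree h'. cmod (coeff h' i) * B ^ i)"
  have Hc0: "Hc \<ge> 0" by (simp add: Hc_def sum_nonneg)
  have B0: "B \<ge> 1" by (simp add: B_def sum_nonneg)
  have H10: "H1 \<ge> 0" using B0 by (simp add: H1_def sum_nonneg)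
  obtain \<sigma> where \<sigma>: "\<sigma> > 0" "\<forall>x\<in>Rt. \<forall>y\<in>Rt. x \<noteq> y \<longrightarrow> \<sigma> \<le> dist x y" using min_sep[OF finRt] by blast
  have \<kappa>2: "\<kappa> / 2 > 0" using \<kappa> by simp
  obtain \<rho>h where \<rho>h: "\<rho>h > 0" "\<forall>w\<in>Rt. \<forall>z. cmod (z - w) < \<rho>h \<longrightarrow> cmod (poly h z - poly h w) < \<kappa> / 2"
    using uniform_cont_finite[OF finRt \<kappa>2] by blast
  define L where "L = 2 ^ (d - 1) * H1"
  have L0: "L \<ge> 0" using H10 by (simp add: L_def)
  define \<rho>0 where "\<rho>0 = min (\<sigma> / 2) (min \<rho>h (\<kappa> / 2 / (L + 1)))"
  have r1: "\<rho>0 > 0" using \<sigma> \<rho>h \<kappa> L0 by (auto simp: \<rho>0_def)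
  have r2: "\<rho>0 \<le> \<sigma> / 2" unfolding \<rho>0_def by (rule min.cobounded1)
  have r3: "\<rho>0 \<le> \<rho>h" unfolding \<rho>0_def by (simp add: min_le_iff_disj)
  note \<rho>0 = r1 r2 r3
  have \<rho>0L: "\<rho>0 * L < \<kappa> / 2" using L0 \<kappa>2 \<rho>0 by (intro small_mult) (auto simp: \<rho>0_def)
  define t where "t = min 1 (min (e / (Hc + 1)) (\<rho>0 ^ (d - 1) / (H1 + 1)))"
  have t: "t > 0" "t \<le> 1" using e Hc0 H10 \<rho>0 by (auto simp: t_def)
  have tHc: "t * Hc < e" using Hc0 e t by (intro small_mult) (auto simp: t_def)
  have tH1: "t * H1 < \<rho>0 ^ (d - 1)" using H10 \<rho>0 t by (intro small_mult) (auto simp: t_def)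
  define q where "q = p + smult (complex_of_real t) h"
  have cq: "coeff q k = coeff p k + complex_of_real t * coeff h k" for k by (simp add: q_def)
  note cf = cm_facts[OF p]
  have qc: "q \<in> centered_monic d"
  proof -
    have cd: "coeff q d = 1" using cf h0[of d] by (simp add: cq)
    have "\<forall>i>d. coeff q i = 0" using coeff_eq_0[of p] cf h0 by (simp add: cq)
    then have "degree q \<le> d" by (rule degree_le)
    moreover have "d \<le> degree q" using cd by (intro le_degree) simp
    ultimately have "degree q = d" by simp
    moreover have "coeff q (d - 1) = 0" using cf h0[of "d - 1"] by (simp add: cq)
    ultimately show ?thesis using cd by (simp add: centered_monic_def)
  qed
  have cl: "close d e p q"
    unfolding close_def
  proof (intro allI impI)
    fix k assume k: "k < d - 1"
    have "dist (coeff q k) (coeff p k) = t * cmod (coeff h k)" using t by (simp add: cq dist_norm norm_mult)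
    also have "\<dots> \<le> t * Hc" unfolding Hc_def using t k
      by (intro mult_left_mono member_le_sum) auto
    finally show "dist (coeff q k) (coeff p k) < e" using tHc by simp
  qed
  have crit: "\<exists>v\<in>critical_values p. cmod (v' - (v + complex_of_real t * \<delta> v)) < \<kappa> * t"
    if v': "v' \<in> critical_values q" for v'
  proof -
    obtain w' where w': "poly (pderiv q) w' = 0" "v' = poly q w'" using v' by (auto simp: critical_values_def)
    have pq: "pderiv q = p' + smult (complex_of_real t) h'" by (simp add: q_def p'_def h'_def pderiv_add pderiv_smult)
    note qd = cm_pderiv[OF qc d1]
    have "cmod w' \<le> 1 + (\<Sum>i<degree (pderiv q). cmod (coeff (pderiv q) i)) / cmod (lead_coeff (pderiv q))"
      by (rule cauchy_bound[OF qd(3) w'(1)])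
    also have "\<dots> = 1 + (\<Sum>i<d - 1. cmod (coeff (pderiv q) i)) / real d" using qd by simp
    also have "\<dots> \<le> B"
    proof -
      have "(\<Sum>i<d - 1. cmod (coeff (pderiv q) i)) \<le> (\<Sum>i<d - 1. cmod (coeff p' i) + cmod (coeff h' i))"
      proof (intro sum_mono)
        fix i
        have "cmod (coeff (pderiv q) i) \<le> cmod (coeff p' i) + cmod (complex_of_real t * coeff h' i)"
          unfolding pq by (simp add: norm_triangle_ineq)
        also have "cmod (complex_of_real t * coeff h' i) \<le> cmod (coeff h' i)"
          using t by (simp add: norm_mult mult_left_le_one_le)
        finally show "cmod (coeff (pderiv q) i) \<le> cmod (coeff p' i) + cmod (coeff h' i)" by simp
      qed
      then have "(\<Sum>i<d - 1. cmod (coeff (pderiv q) i)) / real d \<le> (\<Sum>i<d - 1. cmod (coeff p' i) + cmod (coeff h' i)) / real d"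
        using d by (intro divide_right_mono) auto
      then show ?thesis by (simp add: B_def)
    qed
    finally have w'B: "cmod w' \<le> B" .
    have h'b: "cmod (poly h' w') \<le> H1" unfolding H1_def by (rule poly_bound[OF w'B])
    have pw': "poly p' w' = - (complex_of_real t * poly h' w')" using w'(1) by (simp add: pq eq_neg_iff_add_eq_0)
    have npw': "cmod (poly p' w') \<le> t * H1" using t h'b by (simp add: pw' norm_mult mult_left_mono)
    have "cmod (poly p' w') < cmod (lead_coeff p') * \<rho>0 ^ degree p'"
    proof -
      have "t * H1 < \<rho>0 ^ (d - 1)" by (rule tH1)
      also have "\<dots> \<le> real d * \<rho>0 ^ (d - 1)" using d \<rho>0 by simp
      finally show ?thesis using npw' pd by simp
    qed
    then obtain w where w: "poly p' w = 0" "cmod (w' - w) < \<rho>0" using near_root[OF pd(3) \<rho>0(1)] by blast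
    have wRt: "w \<in> Rt" using w(1) by (simp add: Rt_def)
    obtain root where rt: "\<And>z. poly p' z = lead_coeff p' * (\<Prod>i<degree p'. z - root i)"
      using poly_prod_roots[of p'] by blast
    have rootRt: "root i \<in> Rt" if "i < degree p'" for i
      unfolding Rt_def rt using that by (auto intro!: prod_zero)
    have segb: "cmod (poly p' z) \<le> 2 ^ (d - 1) * cmod (poly p' w')" if z: "z \<in> closed_segment w' w" for z
    proof -
      have zd: "cmod (z - w') \<le> cmod (w' - w)" "cmod (z - w) \<le> cmod (w' - w)"
        using dist_in_closed_segment[OF z] by (auto simp: dist_norm norm_minus_commute)
      have fac: "0 \<le> cmod (z - root i) \<and> cmod (z - root i) \<le> 2 * cmod (w' - root i)" if i: "i < degree p'" for i
      proof (cases "root i = w")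
        case True
        have "cmod (z - w) \<le> 2 * cmod (w' - w)" using zd(2) norm_ge_zero[of "w' - w"] by linarith
        then show ?thesis using True by simp
      next
        case False
        have "\<sigma> \<le> cmod (w - root i)" using \<sigma>(2) rootRt[OF i] wRt False by (auto simp: dist_norm)
        moreover have "cmod (w - root i) \<le> cmod (w - w') + cmod (w' - root i)" using norm_triangle_ineq[of "w - w'" "w' - root i"] by simp
        ultimately have a: "\<rho>0 \<le> cmod (w' - root i)" using w(2) \<rho>0(2) by (simp add: norm_minus_commute)
        have "cmod (z - root i) \<le> cmod (z - w') + cmod (w' - root i)" using norm_triangle_ineq[of "z - w'" "w' - root i"] by simp
        then show ?thesis using a zd(1) w(2) by simp
      qed
      have "cmod (poly p' z) = cmod (lead_coeff p') * (\<Prod>i<degree p'. cmod (z - root i))"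
        unfolding rt by (simp add: norm_mult prod_norm)
      also have "\<dots> \<le> cmod (lead_coeff p') * (2 ^ degree p' * (\<Prod>i<degree p'. cmod (w' - root i)))"
        by (intro mult_left_mono prod_two_bound fac) auto
      also have "\<dots> = 2 ^ (d - 1) * cmod (poly p' w')"
        unfolding rt using pd by (simp add: norm_mult prod_norm)
      finally show ?thesis .
    qed
    have mvt: "cmod (poly p w' - poly p w) \<le> (2 ^ (d - 1) * cmod (poly p' w')) * cmod (w' - w)"
    proof (rule field_differentiable_bound[of "closed_segment w' w" "\<lambda>z. poly p z" "\<lambda>z. poly p' z"])
      show "convex (closed_segment w' w)" by simp
      fix z assume "z \<in> closed_segment w' w"
      show "((\<lambda>z. poly p z) has_field_derivative poly p' z) (at z within closed_segment w' w)"
        unfolding p'_def by (intro DERIV_subset[OF poly_DERIV]) auto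
      show "cmod (poly p' z) \<le> 2 ^ (d - 1) * cmod (poly p' w')" using segb \<open>z \<in> closed_segment w' w\<close> .
    qed auto
    have m1: "cmod (poly p w' - poly p w) \<le> t * (\<kappa> / 2)"
    proof -
      have "(2 ^ (d - 1) * cmod (poly p' w')) * cmod (w' - w) \<le> (2 ^ (d - 1) * (t * H1)) * \<rho>0"
        using npw' w(2) t H10 by (intro mult_mono) auto
      also have "\<dots> = t * (\<rho>0 * L)" by (simp add: L_def)
      also have "\<dots> \<le> t * (\<kappa> / 2)" using \<rho>0L t by (intro mult_left_mono) auto
      finally show ?thesis using mvt by linarith
    qed
    have m2: "cmod (poly h w' - poly h w) < \<kappa> / 2" using \<rho>h(2) wRt w(2) \<rho>0(3) by auto
    define v where "v = poly p w"
    have vc: "v \<in> critical_values p" using w(1) by (auto simp: v_def critical_values_def p'_def)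
    have hw: "poly h w = \<delta> v" using h(2) wRt by (simp add: v_def)
    have "v' - (v + complex_of_real t * \<delta> v) = (poly p w' - poly p w) + complex_of_real t * (poly h w' - poly h w)"
      using w'(2) hw by (simp add: q_def v_def algebra_simps)
    then have "cmod (v' - (v + complex_of_real t * \<delta> v)) \<le> cmod (poly p w' - poly p w) + t * cmod (poly h w' - poly h w)"
      using norm_triangle_ineq[of "poly p w' - poly p w" "complex_of_real t * (poly h w' - poly h w)"] t
      by (simp add: norm_mult)
    also have "\<dots> < t * (\<kappa> / 2) + t * (\<kappa> / 2)"
      using m1 m2 t by (intro add_le_less_mono mult_strict_left_mono) auto
    also have "\<dots> = \<kappa> * t" by simp
    finally show ?thesis using vc by blast
  qed
  show ?thesis using qc cl t crit by blast
qed


lemma density_push: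
  assumes d1: "1 \<le> d" and p: "p \<in> Poly_mt d Ubar" and \<kappa>: "\<kappa> > 0"
    and push: "\<forall>v\<in>Ubar. \<forall>t::real. 0 < t \<and> t \<le> 1 \<longrightarrow> ball (v + complex_of_real t * \<delta> v) (\<kappa> * t) \<subseteq> U"
    and e: "e > 0"
  shows "\<exists>q\<in>Poly_mt d U. close d e p q"
proof (cases "critical_values p = {}")
  case True
  then have "p \<in> Poly_mt d U" using p by (auto simp: Poly_mt_def)
  moreover have "close d e p p" using e by (simp add: close_def)
  ultimately show ?thesis by blast
next
  case False
  have pc: "p \<in> centered_monic d" and cvU: "critical_values p \<subseteq> Ubar" using p by (auto simp: Poly_mt_def)
  have d: "2 \<le> d" using False crit_d2'[OF pc d1] by blast
  obtain q t where q: "q \<in> centered_monic d" "close d e p q" "0 < t" "t \<le> 1"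
    "\<forall>v'\<in>critical_values q. \<exists>v\<in>critical_values p. cmod (v' - (v + complex_of_real t * \<delta> v)) < \<kappa> * t"
    using perturb[OF d pc \<kappa> e, of \<delta>] by blast
  have "critical_values q \<subseteq> U"
  proof
    fix v' assume "v' \<in> critical_values q"
    then obtain v where v: "v \<in> critical_values p" "cmod (v' - (v + complex_of_real t * \<delta> v)) < \<kappa> * t"
      using q(5) by blast
    have "v' \<in> ball (v + complex_of_real t * \<delta> v) (\<kappa> * t)" using v(2) by (simp add: dist_norm norm_minus_commute)
    then show "v' \<in> U" using push v(1) cvU q(3,4) by blast
  qed
  then have "q \<in> Poly_mt d U" using q(1) by (simp add: Poly_mt_def)
  then show ?thesis using q(2) by blast
qed

lemma Poly_part:
  assumes sp: "shape_pair Ubar U" and d1: "1 \<le> d"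
  shows "Poly_mt_top d closure_of (Poly_mt d U) = Poly_mt d Ubar \<and> compactin (Poly_mt_top d) (Poly_mt d Ubar)"
proof -
  note sh = shape_props[OF sp]
  have cl: "closed Ubar" using sh(1) compact_imp_closed by blast
  obtain M where "\<forall>x\<in>Ubar. norm x \<le> M"
    using compact_imp_bounded[OF sh(1)] unfolding bounded_pos by blast
  then have M: "Ubar \<subseteq> cball 0 M" by (auto simp: mem_cball_0)
  have closed: "closedin (Poly_mt_top d) (Poly_mt d Ubar)" by (rule Poly_closed[OF d1 cl])
  have sub: "Poly_mt d U \<subseteq> Poly_mt d Ubar" using sh(2) by (auto simp: Poly_mt_def)
  have subc: "Poly_mt d U \<subseteq> centered_monic d" by (auto simp: Poly_mt_def)
  have dens: "\<exists>q\<in>Poly_mt d U. close d e p q" if "p \<in> Poly_mt d Ubar" "e > 0" for p e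
    using sh(3) unfolding star_or_push_def
  proof (elim disjE exE conjE)
    fix c assume "\<forall>x\<in>Ubar. \<forall>s::real. 0 < s \<and> s < 1 \<longrightarrow> c + complex_of_real s * (x - c) \<in> U"
    then show ?thesis using density_star[OF d1 that(1) _ that(2)] by blast
  next
    fix \<delta> \<kappa> assume "\<kappa> > 0" "\<forall>v\<in>Ubar. \<forall>t::real. 0 < t \<and> t \<le> 1 \<longrightarrow> ball (v + complex_of_real t * \<delta> v) (\<kappa> * t) \<subseteq> U"
    then show ?thesis using density_push[OF d1 that(1)] that(2) by blast
  qed
  have "Poly_mt_top d closure_of (Poly_mt d U) = Poly_mt d Ubar"
  proof
    show "Poly_mt_top d closure_of Poly_mt d U \<subseteq> Poly_mt d Ubar"
      by (rule closure_of_minimal[OF sub closed])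
    show "Poly_mt d Ubar \<subseteq> Poly_mt_top d closure_of Poly_mt d U"
    proof
      fix p assume p: "p \<in> Poly_mt d Ubar"
      then have "p \<in> centered_monic d" by (simp add: Poly_mt_def)
      then show "p \<in> Poly_mt_top d closure_of Poly_mt d U"
        using in_closure_Poly[OF d1 _ subc] dens[OF p] by blast
    qed
  qed
  moreover have "compactin (Poly_mt_top d) (Poly_mt d Ubar)"
  proof -
    obtain R where R: "\<forall>p\<in>Poly_mt d Ubar. \<forall>k<d - 1. cmod (coeff p k) \<le> R"
      using coeff_bound[OF d1 M] by blast
    have "Poly_mt d Ubar \<subseteq> {p \<in> centered_monic d. \<forall>k<d - 1. cmod (coeff p k) \<le> R}"
      using R by (auto simp: Poly_mt_def)
    then show ?thesis by (rule closed_compactin[OF compact_box[OF d1] _ closed])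
  qed
  ultimately show ?thesis by blast
qed

theorem proposition10p8:
  fixes Ubar U :: "complex set" and d n :: nat
  assumes "shape_pair Ubar U"
    and "1 \<le> d" and "n = d - 1"
  shows "Cn_top n closure_of (PiE {..<n} (\<lambda>_. U)) = PiE {..<n} (\<lambda>_. Ubar)
       \<and> compactin (Cn_top n) (PiE {..<n} (\<lambda>_. Ubar))
       \<and> Mult_top n closure_of (Mult n U) = Mult n Ubar
       \<and> compactin (Mult_top n) (Mult n Ubar)
       \<and> Poly_mt_top d closure_of (Poly_mt d U) = Poly_mt d Ubar
       \<and> compactin (Poly_mt_top d) (Poly_mt d Ubar)"
proof -
  note sh = shape_props[OF assms(1)]
  have clos: "closure U = Ubar" by (rule star_or_push_closure[OF sh(3) sh(1) sh(2)])
  have m: "Mult_top n closure_of (Mult n U) = Mult n Ubar \<and> compactin (Mult_top n) (Mult n Ubar)"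
    by (rule Mult_part[OF clos sh(1) sh(2)])
  have pp: "Poly_mt_top d closure_of (Poly_mt d U) = Poly_mt d Ubar \<and> compactin (Poly_mt_top d) (Poly_mt d Ubar)"
    by (rule Poly_part[OF assms(1) assms(2)])
  show ?thesis
    by (intro conjI Cn_closure[OF clos] Cn_compact[OF sh(1)] m[THEN conjunct1] m[THEN conjunct2]
        pp[THEN conjunct1] pp[THEN conjunct2])
qed

end
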